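(* Let $\varphi(z)=Az+b$ be such that $C_\varphi$ is bounded on $\mathcal F(\mathbb C^d)$. Then there exist $S\in\mathbb C^{d\times d}$ and $v\in\mathbb C^d$ such that $C_\varphi$ is similar (via an invertible bounded operator on $\mathcal F(\mathbb C^d)$) to $C_{Sz+v}$, where $S=\begin{pmatrix}T&0\\0&U\end{pmatrix}$, $T\in\mathbb C^{p\times p}$ is upper triangular with diagonal consisting of all eigenvalues of $A$ of modulus $<1$ (with algebraic multiplicity), $U\in\mathbb C^{(d-p)\times(d-p)}$ is a diagonal unitary matrix whose diagonal consists of the eigenvalues of $A$ of modulus $1$, and $v\in\mathbb C^p\times\{0\}^{d-p}$.
   Context: $\mathcal F(\mathbb C^d)$ is the Fock space of entire functions $f$ on $\mathbb C^d$ with $\|f\|^2=(2\pi)^{-d}\int_{\mathbb C^d}|f(z)|^2e^{-|z|^2/2}\,dA(z)<\infty$ ($dA$ Lebesgue measure, $\langle z,w\rangle=\sum_j z_j\overline{w_j}$). $C_\varphi f=f\circ\varphi$. It is known that $C_\varphi$ is bounded iff $\varphi(z)=Az+b$ with $\|A\|\le1$ and $\langle Av,b\rangle=0$ whenever $|Av|=|v|$. *)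

theory Defs
  imports "HOL-Analysis.Analysis" "HOL-Computational_Algebra.Polynomial"
begin

(* Entire functions on C^d: complex (Frechet) differentiable everywhere, with
   complex-linear derivative h \<mapsto> \<Sum>_i g_i h_i. *)
definition entire_fun :: "(complex^'n::finite \<Rightarrow> complex) \<Rightarrow> bool" where
  "entire_fun f \<longleftrightarrow> (\<forall>z. \<exists>g::complex^'n.
      (f has_derivative (\<lambda>h. \<Sum>i\<in>UNIV. g$i * h$i)) (at z))"

definition fock :: "(complex^'n::finite \<Rightarrow> complex) set" where
  "fock = {f. entire_fun f \<and>
      integrable lborel (\<lambda>z. (cmod (f z))^2 * exp (- ((norm z)^2 / 2)))}"

definition fock_norm :: "(complex^'n::finite \<Rightarrow> complex) \<Rightarrow> real" where
  "fock_norm f = sqrt ((1 / (2*pi)) ^ CARD('n) *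
      (\<integral>z. (cmod (f z))^2 * exp (- ((norm z)^2 / 2)) \<partial>lborel))"

definition bounded_fock_op ::
  "((complex^'n::finite \<Rightarrow> complex) \<Rightarrow> (complex^'n \<Rightarrow> complex)) \<Rightarrow> bool" where
  "bounded_fock_op T \<longleftrightarrow>
     (\<forall>f\<in>fock. T f \<in> fock) \<and>
     (\<forall>f\<in>fock. \<forall>g\<in>fock. T (\<lambda>z. f z + g z) = (\<lambda>z. T f z + T g z)) \<and>
     (\<forall>c. \<forall>f\<in>fock. T (\<lambda>z. c * f z) = (\<lambda>z. c * T f z)) \<and>
     (\<exists>K. \<forall>f\<in>fock. fock_norm (T f) \<le> K * fock_norm f)"

definition comp_op ::
  "(complex^'n \<Rightarrow> complex^'n) \<Rightarrow> (complex^'n \<Rightarrow> complex) \<Rightarrow> (complex^'n \<Rightarrow> complex)" where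
  "comp_op \<phi> f = f \<circ> \<phi>"

definition charpoly :: "complex^'n::finite^'n \<Rightarrow> complex poly" where
  "charpoly A = det (\<chi> i j. (if i = j then [:0, 1:] else 0) - [:A$i$j:])"

(* algebraic multiplicity of c as eigenvalue of A (0 if not an eigenvalue) *)
definition alg_mult :: "complex^'n::finite^'n \<Rightarrow> complex \<Rightarrow> nat" where
  "alg_mult A c = order c (charpoly A)"

end

theory Submission
  imports Defs "HOL-Computational_Algebra.Fundamental_Theorem_Algebra" "HOL-Probability.Distributions"
begin


definition cinner :: "complex^'n::finite \<Rightarrow> complex^'n \<Rightarrow> complex" where
  "cinner x y = (\<Sum>i\<in>UNIV. x$i * cnj (y$i))"

definition adjm :: "complex^'m::finite^'n::finite \<Rightarrow> complex^'n^'m" where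
  "adjm M = (\<chi> i j. cnj (M$j$i))"

lemma cinner_add_left: "cinner (x + y) z = cinner x z + cinner y z"
  by (simp add: cinner_def sum.distrib algebra_simps)
lemma cinner_add_right: "cinner z (x + y) = cinner z x + cinner z y"
  by (simp add: cinner_def sum.distrib algebra_simps)
lemma cinner_diff_left: "cinner (x - y) z = cinner x z - cinner y z"
  by (simp add: cinner_def sum_subtractf algebra_simps)
lemma cinner_diff_right: "cinner z (x - y) = cinner z x - cinner z y"
  by (simp add: cinner_def sum_subtractf algebra_simps)
lemma cinner_scale_left: "cinner (c *s x) z = c * cinner x z"
  by (simp add: cinner_def sum_distrib_left algebra_simps)
lemma cinner_scale_right: "cinner z (c *s x) = cnj c * cinner z x"
  by (simp add: cinner_def sum_distrib_left algebra_simps)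
lemma cinner_zero_left[simp]: "cinner 0 x = 0" by (simp add: cinner_def)
lemma cinner_zero_right[simp]: "cinner x 0 = 0" by (simp add: cinner_def)
lemma cinner_sum_left: "cinner (\<Sum>k\<in>K. f k) z = (\<Sum>k\<in>K. cinner (f k) z)"
  by (induct K rule: infinite_finite_induct) (auto simp: cinner_add_left)
lemma cinner_sum_right: "cinner z (\<Sum>k\<in>K. f k) = (\<Sum>k\<in>K. cinner z (f k))"
  by (induct K rule: infinite_finite_induct) (auto simp: cinner_add_right)
lemma cinner_commute: "cinner y x = cnj (cinner x y)"
  by (simp add: cinner_def mult.commute)

lemma norm_sq_vec: "(norm (x::complex^'n::finite))^2 = (\<Sum>i\<in>UNIV. (cmod (x$i))^2)"
  by (simp add: norm_vec_def L2_set_def sum_nonneg)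

lemma cinner_self: "cinner x x = of_real ((norm x)^2)"
proof -
  have "cinner x x = (\<Sum>i\<in>UNIV. of_real ((cmod (x$i))^2))"
    unfolding cinner_def by (intro sum.cong refl) (metis complex_norm_square)
  also have "\<dots> = of_real ((norm x)^2)"
    unfolding norm_sq_vec of_real_sum ..
  finally show ?thesis .
qed

lemma cinner_self_eq_0: "cinner x x = 0 \<longleftrightarrow> x = 0"
  by (simp add: cinner_self)

lemma cinner_adj: "cinner (M *v x) y = cinner x (adjm M *v y)"
proof -
  have "cinner (M *v x) y = (\<Sum>i\<in>UNIV. \<Sum>j\<in>UNIV. M$i$j * x$j * cnj (y$i))"
    unfolding cinner_def matrix_vector_mult_def by (simp add: sum_distrib_right)
  also have "\<dots> = (\<Sum>j\<in>UNIV. \<Sum>i\<in>UNIV. M$i$j * x$j * cnj (y$i))"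
    by (rule sum.swap)
  also have "\<dots> = cinner x (adjm M *v y)"
    unfolding cinner_def matrix_vector_mult_def adjm_def by (simp add: sum_distrib_left mult_ac)
  finally show ?thesis .
qed

lemma adjm_adjm[simp]: "adjm (adjm M) = M"
  by (simp add: adjm_def vec_eq_iff)

lemma cinner_adj2: "cinner x (M *v y) = cinner (adjm M *v x) y"
  by (metis cinner_adj adjm_adjm)

lemma cauchy_schwarz_c: "cmod (cinner x y) \<le> norm x * norm y"
proof -
  have "cmod (cinner x y) \<le> (\<Sum>i\<in>UNIV. cmod (x$i) * cmod (y$i))"
    unfolding cinner_def by (rule order_trans[OF norm_sum]) (simp add: norm_mult)
  also have "\<dots> \<le> L2_set (\<lambda>i. cmod (x$i)) UNIV * L2_set (\<lambda>i. cmod (y$i)) UNIV"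
    using L2_set_mult_ineq[of "\<lambda>i. cmod (x$i)" "\<lambda>i. cmod (y$i)" UNIV] by simp
  finally show ?thesis by (simp add: norm_vec_def)
qed

lemma mv_add: "M *v (x + y) = M *v x + M *v (y::'a::comm_ring_1^'n::finite)"
  by (simp add: matrix_vector_right_distrib)
lemma mv_scale: "M *v (c *s x) = c *s (M *v (x::'a::comm_ring_1^'n::finite))"
  by (simp add: vec_eq_iff matrix_vector_mult_def sum_distrib_left mult_ac)

lemma scaleR_as_smult: "(r::real) *\<^sub>R (x::complex^'n::finite) = complex_of_real r *s x"
proof (rule iffD2[OF vec_eq_iff], rule allI)
  fix i
  have "(r *\<^sub>R x)$i = r *\<^sub>R (x$i)" by (rule vector_scaleR_component)
  also have "\<dots> = of_real r * x$i" by (rule scaleR_conv_of_real)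
  also have "\<dots> = (complex_of_real r *s x)$i" by simp
  finally show "(r *\<^sub>R x)$i = (complex_of_real r *s x)$i" .
qed

lemma real_dep:
  fixes f :: "nat \<Rightarrow> 'a::euclidean_space"
  shows "\<exists>c. (\<exists>k\<le>DIM('a). c k \<noteq> 0) \<and> (\<Sum>k\<le>DIM('a). c k *\<^sub>R f k) = 0"
proof (cases "inj_on f {..DIM('a)}")
  case False
  then obtain i j where ij: "i \<le> DIM('a)" "j \<le> DIM('a)" "i \<noteq> j" "f i = f j"
    unfolding inj_on_def by auto
  define c where "c = (\<lambda>k. if k = i then 1 else if k = j then -1 else (0::real))"
  have "(\<Sum>k\<le>DIM('a). c k *\<^sub>R f k) = (\<Sum>k\<in>{i,j}. c k *\<^sub>R f k)"
    by (rule sum.mono_neutral_right) (use ij in \<open>auto simp: c_def\<close>)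
  also have "\<dots> = 0" using ij by (simp add: c_def)
  finally show ?thesis using ij by (intro exI[of _ c]) (auto simp: c_def)
next
  case True
  let ?S = "f ` {..DIM('a)}"
  have "card ?S = Suc DIM('a)" using True by (simp add: card_image)
  hence "dependent ?S" using independent_bound[of ?S] by auto
  then obtain t u where t: "finite t" "t \<subseteq> ?S" "(\<Sum>v\<in>t. u v *\<^sub>R v) = 0" "\<exists>v\<in>t. u v \<noteq> 0"
    unfolding dependent_explicit by blast
  define c where "c = (\<lambda>k. if f k \<in> t then u (f k) else 0)"
  let ?K = "{k\<in>{..DIM('a)}. f k \<in> t}"
  have "(\<Sum>k\<le>DIM('a). c k *\<^sub>R f k) = (\<Sum>k\<in>?K. c k *\<^sub>R f k)"
    by (rule sum.mono_neutral_right) (auto simp: c_def)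
  also have "\<dots> = (\<Sum>k\<in>?K. u (f k) *\<^sub>R f k)" by (simp add: c_def)
  also have "\<dots> = (\<Sum>v\<in>f ` ?K. u v *\<^sub>R v)"
    by (rule sum.reindex[symmetric, unfolded comp_def]) (use True in \<open>auto intro: inj_on_subset\<close>)
  also have "f ` ?K = t" using t(2) by auto
  finally have s: "(\<Sum>k\<le>DIM('a). c k *\<^sub>R f k) = 0" using t(3) by simp
  from t(4) t(2) obtain k where "k \<le> DIM('a)" "f k \<in> t" "u (f k) \<noteq> 0" by auto
  hence "\<exists>k\<le>DIM('a). c k \<noteq> 0" by (auto simp: c_def)
  with s show ?thesis by blast
qed

locale clin =
  fixes B :: "complex^'n::finite \<Rightarrow> complex^'n"
  assumes badd: "\<And>x y. B (x + y) = B x + B y"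
    and bsc: "\<And>c x. B (c *s x) = c *s B x"
begin

lemma b0: "B 0 = 0"
  using bsc[of 0 0] by simp

lemma bsum: "B (\<Sum>k\<in>K. f k) = (\<Sum>k\<in>K. B (f k))"
  by (induct K rule: infinite_finite_induct) (auto simp: b0 badd)

definition pe :: "complex poly \<Rightarrow> complex^'n \<Rightarrow> complex^'n" where
  "pe p x = (\<Sum>k\<le>degree p. coeff p k *s (B^^k) x)"

lemma pe_ext: assumes "degree p \<le> n" shows "pe p x = (\<Sum>k\<le>n. coeff p k *s (B^^k) x)"
  unfolding pe_def by (rule sum.mono_neutral_left) (use assms in \<open>auto simp: coeff_eq_0\<close>)

lemma pe_add: "pe (p + q) x = pe p x + pe q x"
proof -
  let ?n = "max (degree p) (degree q)"
  have "degree (p + q) \<le> ?n" by (rule degree_add_le) auto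
  then show ?thesis
    by (simp add: pe_ext[of _ ?n] sum.distrib vector_sadd_rdistrib)
qed

lemma pe_smult: "pe (smult a p) x = a *s pe p x"
  by (simp add: pe_ext[of "smult a p" "degree p"] pe_def vector_smult_assoc vec.scale_sum_right)

lemma pe_pCons0: "pe (pCons 0 p) x = B (pe p x)"
proof -
  have "pe (pCons 0 p) x = (\<Sum>k\<le>Suc (degree p). coeff (pCons 0 p) k *s (B^^k) x)"
    by (rule pe_ext) (simp add: degree_pCons_le)
  also have "\<dots> = (\<Sum>k\<le>degree p. coeff p k *s (B^^(Suc k)) x)"
    by (subst sum.atMost_Suc_shift) simp
  also have "\<dots> = B (pe p x)"
    by (simp add: pe_def bsum bsc)
  finally show ?thesis .
qed

end


context clin begin

lemma funpow_in: assumes "\<And>x. x \<in> W \<Longrightarrow> B x \<in> W" "w \<in> W" shows "(B^^k) w \<in> W"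
  by (induct k) (auto intro: assms)

lemma eig_in_subspace:
  assumes Wadd: "\<And>x y. x \<in> W \<Longrightarrow> y \<in> W \<Longrightarrow> x + y \<in> W"
    and Wsc: "\<And>c x. x \<in> W \<Longrightarrow> c *s x \<in> W"
    and WB: "\<And>x. x \<in> W \<Longrightarrow> B x \<in> W"
    and w: "w \<in> W" "w \<noteq> 0"
  shows "\<exists>x\<in>W. x \<noteq> 0 \<and> (\<exists>l. B x = l *s x)"
proof -
  have W0: "0 \<in> W" using Wsc[OF w(1), of 0] by simp
  have Wsum: "(\<Sum>k\<in>K. f k) \<in> W" if "finite K" "\<And>k. k \<in> K \<Longrightarrow> f k \<in> W" for K and f :: "nat \<Rightarrow> _"
    using that by (induct K rule: finite_induct) (auto intro: W0 Wadd)
  have peW: "pe p w \<in> W" for p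
    unfolding pe_def by (intro Wsum) (auto intro: Wsc funpow_in[OF WB w(1)])
  define D where "D = DIM(complex^'n)"
  obtain c where c: "\<exists>k\<le>D. c k \<noteq> 0" "(\<Sum>k\<le>D. c k *\<^sub>R (B^^k) w) = 0"
    using real_dep[of "\<lambda>k. (B^^k) w"] unfolding D_def by blast
  define p where "p = (\<Sum>k\<le>D. monom (complex_of_real (c k)) k)"
  have cp: "coeff p k = (if k \<le> D then complex_of_real (c k) else 0)" for k
    unfolding p_def by (simp add: coeff_sum coeff_monom)
  have dp: "degree p \<le> D"
    by (rule degree_le) (auto simp: cp)
  have "pe p w = (\<Sum>k\<le>D. coeff p k *s (B^^k) w)" by (rule pe_ext[OF dp])
  also have "\<dots> = (\<Sum>k\<le>D. c k *\<^sub>R (B^^k) w)" by (simp add: cp scaleR_as_smult)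
  finally have pe0: "pe p w = 0" using c(2) by simp
  have pnz: "p \<noteq> 0" using c(1) cp by (metis coeff_0 of_real_eq_0_iff)
  define P where "P = (\<lambda>d. \<exists>q. q \<noteq> 0 \<and> degree q = d \<and> pe q w = 0)"
  have "P (degree p)" unfolding P_def using pnz pe0 by blast
  hence "P (LEAST d. P d)" by (rule LeastI)
  then obtain q where q: "q \<noteq> 0" "degree q = (LEAST d. P d)" "pe q w = 0" unfolding P_def by blast
  have "degree q \<noteq> 0"
  proof
    assume "degree q = 0"
    then have "q = [:coeff q 0:]" by (metis degree_0_id)
    moreover have "pe [:coeff q 0:] w = coeff q 0 *s w" by (simp add: pe_def)
    moreover have "coeff q 0 \<noteq> 0" using q(1) \<open>degree q = 0\<close> by (metis leading_coeff_0_iff)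
    ultimately show False using q(3) w(2) by (simp add: vector_mul_eq_0)
  qed
  then have "\<not> constant (poly q)" by (simp add: constant_degree)
  then obtain r where r: "poly q r = 0" using fundamental_theorem_of_algebra by blast
  then obtain q' where q': "q = [:-r, 1:] * q'" using poly_eq_0_iff_dvd by (metis dvdE)
  have q'nz: "q' \<noteq> 0" using q(1) q' by auto
  have "degree q = degree [:-r, 1:] + degree q'" unfolding q' by (rule degree_mult_eq) (use q'nz in auto)
  hence "degree q = Suc (degree q')" by simp
  hence "degree q' < (LEAST d. P d)" using q(2) by simp
  hence "\<not> P (degree q')" by (rule not_less_Least)
  hence xnz: "pe q' w \<noteq> 0" unfolding P_def using q'nz by blast
  have "[:-r, 1:] * q' = smult (-r) q' + pCons 0 q'" by simp
  hence "pe q w = (-r) *s pe q' w + B (pe q' w)" unfolding q' by (simp only: pe_add pe_smult pe_pCons0)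
  hence e: "(-r) *s pe q' w + B (pe q' w) = 0" using q(3) by simp
  have "B (pe q' w) = r *s pe q' w"
  proof (rule iffD2[OF vec_eq_iff], rule allI)
    fix i
    from e have "(-r) * pe q' w $ i + B (pe q' w) $ i = 0" by (simp add: vec_eq_iff)
    thus "B (pe q' w) $ i = (r *s pe q' w) $ i" by (simp add: algebra_simps add_eq_0_iff)
  qed
  thus ?thesis using xnz peW by blast
qed

end


definition proj :: "nat \<Rightarrow> (nat \<Rightarrow> complex^'n::finite) \<Rightarrow> complex^'n \<Rightarrow> complex^'n" where
  "proj k q x = x - (\<Sum>i<k. cinner x (q i) *s q i)"

definition orthn :: "nat \<Rightarrow> (nat \<Rightarrow> complex^'n::finite) \<Rightarrow> bool" where
  "orthn k q \<longleftrightarrow> (\<forall>i<k. \<forall>j<k. cinner (q i) (q j) = (if i = j then 1 else 0))"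

lemma proj_orth:
  assumes "orthn k q" "j < k"
  shows "cinner (proj k q x) (q j) = 0"
proof -
  have "cinner (\<Sum>i<k. cinner x (q i) *s q i) (q j) = (\<Sum>i<k. cinner x (q i) * cinner (q i) (q j))"
    by (simp add: cinner_sum_left cinner_scale_left)
  also have "\<dots> = (\<Sum>i<k. if i = j then cinner x (q i) else 0)"
    using assms by (intro sum.cong refl) (auto simp: orthn_def)
  also have "\<dots> = cinner x (q j)" using assms(2) by simp
  finally show ?thesis by (simp add: proj_def cinner_diff_left)
qed

lemma proj_add: "proj k q (x + y) = proj k q x + proj k q y"
  by (simp add: proj_def cinner_add_left vector_sadd_rdistrib sum.distrib)

lemma proj_scale: "proj k q (c *s x) = c *s proj k q x"
  by (simp add: proj_def cinner_scale_left vec.scale_sum_right vector_smult_assoc vec.scale_right_diff_distrib)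

lemma complement_nonzero:
  fixes q :: "nat \<Rightarrow> complex^'n::finite"
  assumes o: "orthn k q" and k: "k < CARD('n)"
  shows "\<exists>x. x \<noteq> 0 \<and> (\<forall>i<k. cinner x (q i) = 0)"
proof (rule ccontr)
  assume "\<not> ?thesis"
  hence all: "x = (\<Sum>i<k. cinner x (q i) *s q i)" for x
    using proj_orth[OF o] by (metis eq_iff_diff_eq_0 proj_def)
  let ?S = "q ` {..<k} \<union> (\<lambda>i. \<i> *s q i) ` {..<k}"
  have sc: "c *s q i \<in> span ?S" if "i < k" for c i
  proof -
    have "c *s q i = Re c *\<^sub>R q i + Im c *\<^sub>R (\<i> *s q i)"
      by (simp add: scaleR_as_smult vector_smult_assoc vector_sadd_rdistrib[symmetric] complex_eq[symmetric] mult.commute)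
    moreover have "q i \<in> span ?S" "\<i> *s q i \<in> span ?S" using that by (auto intro: span_base)
    ultimately show ?thesis by (metis span_add span_scale)
  qed
  have "UNIV \<subseteq> span ?S"
  proof
    fix x :: "complex^'n"
    show "x \<in> span ?S" by (subst all) (auto intro!: span_sum sc)
  qed
  hence "dim (UNIV :: (complex^'n) set) \<le> card ?S"
    by (intro span_card_ge_dim) auto
  also have "card ?S \<le> k + k"
    by (rule order_trans[OF card_Un_le]) (intro add_mono; rule order_trans[OF card_image_le]; simp)
  finally show False using k by (simp add: dim_UNIV DIM_cart)
qed


lemma schur_flag:
  fixes A :: "complex^'n::finite^'n"
  shows "k \<le> CARD('n) \<Longrightarrow> \<exists>q. orthn k q \<and> (\<forall>i<k. \<forall>j<i. cinner (A *v q j) (q i) = 0) \<and>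
          (\<forall>j<k. A *v q j = (\<Sum>i<k. cinner (A *v q j) (q i) *s q i))"
proof (induct k)
  case 0
  show ?case by (auto simp: orthn_def)
next
  case (Suc k)
  then obtain q where o: "orthn k q" and tri: "\<forall>i<k. \<forall>j<i. cinner (A *v q j) (q i) = 0"
    and sp: "\<forall>j<k. A *v q j = (\<Sum>i<k. cinner (A *v q j) (q i) *s q i)" by auto
  interpret clin "\<lambda>x. proj k q (A *v x)"
    by unfold_locales (simp_all add: mv_add mv_scale proj_add proj_scale)
  let ?W = "{x. \<forall>i<k. cinner x (q i) = 0}"
  obtain w where w: "w \<noteq> 0" "w \<in> ?W" using complement_nonzero[OF o] Suc(2) by auto
  have "\<exists>x\<in>?W. x \<noteq> 0 \<and> (\<exists>l. proj k q (A *v x) = l *s x)"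
    by (rule eig_in_subspace[OF _ _ _ w(2) w(1)])
       (auto simp: cinner_add_left cinner_scale_left proj_orth[OF o])
  then obtain x l where x: "x \<in> ?W" "x \<noteq> 0" "proj k q (A *v x) = l *s x" by blast
  define y where "y = complex_of_real (1 / norm x) *s x"
  have yW: "cinner y (q i) = 0" if "i < k" for i using x(1) that by (simp add: y_def cinner_scale_left)
  have yW': "cinner (q i) y = 0" if "i < k" for i using yW[OF that] by (metis cinner_commute complex_cnj_zero)
  have yy: "cinner y y = 1"
  proof -
    have "norm x \<noteq> 0" using x(2) by simp
    hence "(1 / norm x) * (1 / norm x) * (norm x)^2 = 1" by (simp add: power2_eq_square)
    hence h: "complex_of_real ((1 / norm x) * ((1 / norm x) * (norm x)^2)) = 1" by (simp add: mult.assoc)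
    have "cinner y y = cnj (complex_of_real (1/norm x)) * (complex_of_real (1/norm x) * cinner x x)"
      unfolding y_def cinner_scale_left cinner_scale_right ..
    also have "\<dots> = 1" unfolding cinner_self complex_cnj_complex_of_real of_real_mult[symmetric] by (rule h)
    finally show ?thesis .
  qed
  have py: "proj k q (A *v y) = l *s y"
    unfolding y_def mv_scale proj_scale x(3) by (simp add: vector_smult_assoc mult.commute)
  define q' where "q' = (\<lambda>i. if i = k then y else q i)"
  have tri_new: "cinner (A *v q j) y = 0" if "j < k" for j
  proof -
    have "cinner (A *v q j) y = (\<Sum>i<k. cinner (A *v q j) (q i) * cinner (q i) y)"
      by (subst sp[rule_format, OF that]) (simp add: cinner_sum_left cinner_scale_left)
    also have "\<dots> = 0" by (intro sum.neutral) (simp add: yW')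
    finally show ?thesis .
  qed
  have "orthn (Suc k) q'"
    unfolding orthn_def
  proof (intro allI impI)
    fix i j assume ij: "i < Suc k" "j < Suc k"
    show "cinner (q' i) (q' j) = (if i = j then 1 else 0)"
      using ij o yy yW yW' by (cases "i = k"; cases "j = k") (auto simp: q'_def orthn_def)
  qed
  moreover have "\<forall>i<Suc k. \<forall>j<i. cinner (A *v q' j) (q' i) = 0"
  proof (intro allI impI)
    fix i j assume ij: "i < Suc k" "j < i"
    show "cinner (A *v q' j) (q' i) = 0"
    proof (cases "i = k")
      case True
      then show ?thesis using ij tri_new by (simp add: q'_def)
    next
      case False
      then show ?thesis using ij tri by (simp add: q'_def)
    qed
  qed
  moreover have "\<forall>j<Suc k. A *v q' j = (\<Sum>i<Suc k. cinner (A *v q' j) (q' i) *s q' i)"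
  proof (intro allI impI)
    fix j assume j: "j < Suc k"
    have qi: "(\<Sum>i<k. f (q' i)) = (\<Sum>i<k. f (q i))" for f :: "complex^'n \<Rightarrow> complex^'n"
      by (intro sum.cong refl) (simp add: q'_def)
    show "A *v q' j = (\<Sum>i<Suc k. cinner (A *v q' j) (q' i) *s q' i)"
    proof (cases "j = k")
      case False
      with j have jk: "j < k" by simp
      have "(\<Sum>i<Suc k. cinner (A *v q' j) (q' i) *s q' i) = (\<Sum>i<k. cinner (A *v q j) (q i) *s q i)"
        using jk tri_new[OF jk] by (simp add: q'_def)
      then show ?thesis using sp jk False by (simp add: q'_def)
    next
      case True
      have Ay: "A *v y = l *s y + (\<Sum>i<k. cinner (A *v y) (q i) *s q i)"
        using py unfolding proj_def by (simp add: algebra_simps)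
      have "cinner (A *v y) y = l * cinner y y + (\<Sum>i<k. cinner (A *v y) (q i) * cinner (q i) y)"
        by (subst Ay) (simp add: cinner_add_left cinner_scale_left cinner_sum_left)
      also have "\<dots> = l" using yy by (simp add: yW')
      finally have l: "cinner (A *v y) y = l" .
      have "(\<Sum>i<Suc k. cinner (A *v q' j) (q' i) *s q' i) = (\<Sum>i<k. cinner (A *v y) (q i) *s q i) + l *s y"
        using True l by (simp add: q'_def)
      then show ?thesis using Ay True by (simp add: q'_def add.commute)
    qed
  qed
  ultimately show ?case by blast
qed


lemma norm_eq_of_cinner: "cinner a a = cinner b b \<Longrightarrow> norm a = norm b"
  unfolding cinner_self of_real_eq_iff by (simp add: power2_eq_iff_nonneg)

lemma adjm_mult: "adjm (M ** N) = adjm N ** adjm M"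
  by (simp add: adjm_def matrix_matrix_mult_def vec_eq_iff mult.commute)

lemma adjm_comp: "(adjm M)$i$j = cnj (M$j$i)" by (simp add: adjm_def)

lemma unitary_norm:
  assumes "adjm Q ** Q = mat 1" shows "norm (Q *v x) = norm x"
proof (rule norm_eq_of_cinner)
  show "cinner (Q *v x) (Q *v x) = cinner x x"
    by (simp add: cinner_adj matrix_vector_mul_assoc assms)
qed

lemma cmod_comp_le: "cmod (x$i) \<le> norm (x::complex^'n::finite)"
proof -
  have "(cmod (x$i))^2 \<le> (norm x)^2" unfolding norm_sq_vec
    by (rule member_le_sum) auto
  thus ?thesis by (simp add: power2_le_iff_abs_le)
qed

lemma mv_axis: "((M::complex^'n::finite^'m::finite) *v axis i 1)$j = M$j$i"
  by (simp add: matrix_vector_mult_def axis_def if_distrib cong: if_cong)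

lemma norm_axis1: "norm (axis i (1::complex)) = 1"
proof -
  have "(\<Sum>j\<in>UNIV. (cmod (axis i (1::complex) $ j))^2) = (\<Sum>j\<in>UNIV. if j = i then 1 else 0)"
    by (intro sum.cong refl) (simp add: axis_def)
  hence "(norm (axis i (1::complex)))^2 = 1" unfolding norm_sq_vec by simp
  thus ?thesis by (simp add: power2_eq_1_iff)
qed

lemma decouple:
  fixes T :: "complex^'n::finite^'n"
  assumes c: "\<And>x. norm (T *v x) \<le> norm x" and d: "cmod (T$i$i) = 1" and ji: "j \<noteq> i"
  shows "T$j$i = 0"
proof -
  let ?e = "T *v axis i 1"
  have "(norm ?e)^2 \<le> 1" using c[of "axis i 1"] by (simp add: norm_axis1 power_le_one)
  moreover have "(norm ?e)^2 = (cmod (T$i$i))^2 + (\<Sum>k\<in>UNIV-{i}. (cmod (T$k$i))^2)"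
    unfolding norm_sq_vec mv_axis by (subst sum.remove[of _ i]) auto
  ultimately have "(\<Sum>k\<in>UNIV-{i}. (cmod (T$k$i))^2) = 0" using d
    by (simp add: sum_nonneg antisym)
  hence "(cmod (T$j$i))^2 = 0" using ji by (subst (asm) sum_nonneg_eq_0_iff) auto
  thus ?thesis by simp
qed

lemma diag_le:
  fixes T :: "complex^'n::finite^'n"
  assumes c: "\<And>x. norm (T *v x) \<le> norm x"
  shows "cmod (T$i$i) \<le> 1"
  using cmod_comp_le[of "T *v axis i 1" i] c[of "axis i 1"] by (simp add: mv_axis norm_axis1)

lemma conj_entry:
  "(adjm Q ** M ** Q)$i$j = cinner (M *v (\<chi> r. Q$r$j)) (\<chi> r. Q$r$i)"
proof -
  have "(adjm Q ** M ** Q)$i$j = (\<Sum>r\<in>UNIV. \<Sum>s\<in>UNIV. cnj (Q$s$i) * M$s$r * Q$r$j)"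
    by (simp add: matrix_matrix_mult_def adjm_def sum_distrib_right)
  also have "\<dots> = (\<Sum>s\<in>UNIV. \<Sum>r\<in>UNIV. cnj (Q$s$i) * M$s$r * Q$r$j)" by (rule sum.swap)
  also have "\<dots> = cinner (M *v (\<chi> r. Q$r$j)) (\<chi> r. Q$r$i)"
    by (simp add: cinner_def matrix_vector_mult_def sum_distrib_right sum_distrib_left mult_ac)
  finally show ?thesis .
qed

lemma contr_adj:
  assumes "\<And>w. norm (adjm A *v w) \<le> norm w"
  shows "norm (A *v x) \<le> norm (x::complex^'n::finite)"
proof -
  have "(norm (A *v x))^2 = Re (cinner (A *v x) (A *v x))" by (simp add: cinner_self)
  also have "\<dots> = Re (cinner x (adjm A *v (A *v x)))" by (simp add: cinner_adj)
  also have "\<dots> \<le> cmod (cinner x (adjm A *v (A *v x)))" by (rule complex_Re_le_cmod)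
  also have "\<dots> \<le> norm x * norm (adjm A *v (A *v x))" by (rule cauchy_schwarz_c)
  also have "\<dots> \<le> norm x * norm (A *v x)" by (intro mult_left_mono assms) auto
  finally have "norm (A *v x) * norm (A *v x) \<le> norm x * norm (A *v x)" by (simp add: power2_eq_square)
  thus ?thesis by (cases "norm (A *v x) = 0") auto
qed


theorem lin_struct:
  fixes A :: "((complex, 'n::{finite,linorder}) vec, 'n) vec" and b :: "(complex, 'n) vec"
  assumes contr: "\<And>w. norm (adjm A *v w) \<le> norm w"
    and bc: "\<And>w. norm (adjm A *v w) = norm w \<Longrightarrow> cinner b w = 0"
  shows "\<exists>(Q::((complex, 'n) vec, 'n) vec) P. adjm Q ** Q = mat 1 \<and> Q ** adjm Q = mat 1 \<and>
    (\<forall>i\<in>P. \<forall>j. j \<notin> P \<longrightarrow> i < j) \<and>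
    (\<forall>i j. j < i \<longrightarrow> (adjm Q ** A ** Q)$i$j = 0) \<and>
    (\<forall>i j. (i \<in> P \<and> j \<notin> P) \<or> (i \<notin> P \<and> j \<in> P) \<longrightarrow> (adjm Q ** A ** Q)$i$j = 0) \<and>
    (\<forall>i j. i \<notin> P \<and> j \<notin> P \<and> i \<noteq> j \<longrightarrow> (adjm Q ** A ** Q)$i$j = 0) \<and>
    (\<forall>i. i \<notin> P \<longleftrightarrow> cmod ((adjm Q ** A ** Q)$i$i) = 1) \<and>
    (\<forall>i. cmod ((adjm Q ** A ** Q)$i$i) \<le> 1) \<and>
    (\<forall>i. i \<notin> P \<longrightarrow> (adjm Q *v b)$i = 0)"
proof -
  define N where "N = CARD('n::{finite,linorder})"
  obtain q where o: "orthn N q" and tri: "\<forall>i<N. \<forall>j<i. cinner (A *v q j) (q i) = 0"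
    using schur_flag[of N A] unfolding N_def by auto
  define J where "J = {k. k < N \<and> cmod (cinner (A *v q k) (q k)) = 1}"
  define nJ where "nJ = sorted_list_of_set ({..<N} - J)"
  define Jl where "Jl = sorted_list_of_set J"
  define m where "m = length nJ"
  define rank where "rank = (\<lambda>i::'n. card {j. j < i})"
  define g where "g = (\<lambda>k. if k < m then nJ ! k else Jl ! (k - m))"
  define phi where "phi = (\<lambda>i. g (rank i))"
  define P where "P = {i. rank i < m}"
  define Q where "Q = (\<chi> r c. q (phi c) $ r)"
  have finJ: "finite J" "J \<subseteq> {..<N}" by (auto simp: J_def)
  have setnJ: "set nJ = {..<N} - J" and setJl: "set Jl = J" using finJ by (auto simp: nJ_def Jl_def)
  have lenJl: "length Jl = card J" by (simp add: Jl_def)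
  have cardJ: "m + card J = N"
  proof -
    have "card J \<le> N" using card_mono[OF _ finJ(2)] by simp
    thus ?thesis using finJ by (simp add: m_def nJ_def card_Diff_subset)
  qed
  have rank_lt: "rank i < N" for i
  proof -
    have "{j. j < i} \<subset> (UNIV::'n set)" by auto
    thus ?thesis unfolding rank_def N_def by (rule psubset_card_mono[rotated]) simp
  qed
  have rank_mono: "rank i < rank j" if "i < j" for i j
  proof -
    have "{k. k < i} \<subset> {k. k < j}" using that by auto
    thus ?thesis unfolding rank_def by (rule psubset_card_mono[rotated]) simp
  qed
  have rank_inj: "i = j" if "rank i = rank j" for i j
    using rank_mono[of i j] rank_mono[of j i] that by (cases i j rule: linorder_cases) auto
  have phiP: "phi i \<in> {..<N} - J" if "i \<in> P" for i
  proof -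
    have "rank i < length nJ" using that by (simp add: P_def m_def)
    hence "nJ ! rank i \<in> set nJ" by simp
    thus ?thesis using that by (simp add: phi_def g_def P_def setnJ)
  qed
  have phinP: "phi i \<in> J" if "i \<notin> P" for i
  proof -
    have "rank i - m < length Jl" using that rank_lt[of i] cardJ lenJl by (simp add: P_def)
    hence "Jl ! (rank i - m) \<in> set Jl" by simp
    thus ?thesis using that by (simp add: phi_def g_def P_def setJl)
  qed
  have phi_lt: "phi i < N" for i using phiP[of i] phinP[of i] finJ by auto
  have phiJ: "phi i \<in> J \<longleftrightarrow> i \<notin> P" for i using phiP[of i] phinP[of i] by auto
  have phi_inj: "i = j" if "phi i = phi j" for i j
  proof (cases "i \<in> P")
    case True
    hence jP: "j \<in> P" using phiJ[of i] phiJ[of j] that by auto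
    have "nJ ! rank i = nJ ! rank j" using that True jP by (simp add: phi_def g_def P_def)
    hence "rank i = rank j" using True jP
      by (subst (asm) nth_eq_iff_index_eq) (auto simp: nJ_def P_def m_def)
    thus ?thesis by (rule rank_inj)
  next
    case False
    hence jP: "j \<notin> P" using phiJ[of i] phiJ[of j] that by auto
    have "Jl ! (rank i - m) = Jl ! (rank j - m)" using that False jP by (simp add: phi_def g_def P_def)
    hence "rank i - m = rank j - m" using False jP rank_lt[of i] rank_lt[of j] cardJ lenJl
      by (subst (asm) nth_eq_iff_index_eq) (auto simp: Jl_def P_def)
    hence "rank i = rank j" using False jP by (simp add: P_def)
    thus ?thesis by (rule rank_inj)
  qed
  have phi_mono: "phi j < phi i" if "i \<in> P" "j \<in> P" "j < i" for i j
  proof -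
    have "rank j < rank i" by (rule rank_mono[OF that(3)])
    moreover have "rank i < length nJ" using that by (simp add: P_def m_def)
    ultimately have "nJ ! rank j < nJ ! rank i"
      using sorted_wrt_nth_less[OF strict_sorted_list_of_set] unfolding nJ_def by blast
    thus ?thesis using that by (simp add: phi_def g_def P_def)
  qed
  have col: "(\<chi> r. Q$r$c) = q (phi c)" for c by (simp add: Q_def vec_eq_iff)
  have U1: "adjm Q ** Q = mat 1"
  proof -
    have "(adjm Q ** Q)$c$c' = (if c = c' then 1 else 0)" for c c'
    proof -
      have "(adjm Q ** Q)$c$c' = cinner (q (phi c')) (q (phi c))"
        by (simp add: matrix_matrix_mult_def adjm_def cinner_def Q_def mult.commute)
      also have "\<dots> = (if c = c' then 1 else 0)"
        using o phi_lt[of c] phi_lt[of c'] phi_inj[of c c'] by (auto simp: orthn_def)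
      finally show ?thesis .
    qed
    thus ?thesis by (simp add: vec_eq_iff mat_def)
  qed
  have U2: "Q ** adjm Q = mat 1" using U1 matrix_left_right_inverse by blast
  define S where "S = adjm Q ** A ** Q"
  have Sij: "S$i$j = cinner (A *v q (phi j)) (q (phi i))" for i j
    unfolding S_def conj_entry col ..
  have U1': "adjm (adjm Q) ** adjm Q = mat 1" using U2 by simp
  have cS: "norm (S *v x) \<le> norm x" for x
  proof -
    have "S *v x = adjm Q *v (A *v (Q *v x))" by (simp add: S_def matrix_vector_mul_assoc matrix_mul_assoc)
    hence "norm (S *v x) = norm (A *v (Q *v x))" by (simp add: unitary_norm[OF U1'])
    also have "\<dots> \<le> norm (Q *v x)" by (rule contr_adj[OF contr])
    also have "\<dots> = norm x" by (rule unitary_norm[OF U1])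
    finally show ?thesis .
  qed
  have adjS: "adjm S = adjm Q ** (adjm A ** Q)"
    by (simp add: S_def adjm_mult matrix_mul_assoc)
  have cSa: "norm (adjm S *v x) \<le> norm x" for x
  proof -
    have "adjm S *v x = adjm Q *v (adjm A *v (Q *v x))" by (simp add: adjS matrix_vector_mul_assoc)
    hence "norm (adjm S *v x) = norm (adjm A *v (Q *v x))" by (simp add: unitary_norm[OF U1'])
    also have "\<dots> \<le> norm (Q *v x)" by (rule contr)
    also have "\<dots> = norm x" by (rule unitary_norm[OF U1])
    finally show ?thesis .
  qed
  have diag1: "cmod (S$i$i) = 1 \<longleftrightarrow> i \<notin> P" for i
    using phiJ[of i] phi_lt[of i] by (simp add: Sij J_def)
  have colz: "S$j$i = 0" if "i \<notin> P" "j \<noteq> i" for i j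
    by (rule decouple[OF cS _ that(2)]) (use diag1 that in auto)
  have rowz: "S$i$j = 0" if "i \<notin> P" "j \<noteq> i" for i j
  proof -
    have "(adjm S)$j$i = 0"
      by (rule decouple[OF cSa _ that(2)]) (use diag1 that in \<open>auto simp: adjm_comp\<close>)
    thus ?thesis by (simp add: adjm_comp)
  qed
  have dle: "cmod (S$i$i) \<le> 1" for i by (rule diag_le[OF cS])
  have C1: "\<forall>i\<in>P. \<forall>j. j \<notin> P \<longrightarrow> i < j"
  proof (intro ballI allI impI)
    fix i j assume "i \<in> P" "j \<notin> P"
    hence "rank i < rank j" by (simp add: P_def)
    thus "i < j" using rank_mono[of j i] by (cases i j rule: linorder_cases) auto
  qed
  have C3: "S$i$j = 0" if "i \<in> P" "j \<in> P" "j < i" for i j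
    using tri phi_lt phi_mono[OF that] by (simp add: Sij)
  have C2: "\<forall>i j. (i \<in> P \<and> j \<notin> P) \<or> (i \<notin> P \<and> j \<in> P) \<longrightarrow> S$i$j = 0"
    using colz rowz by metis
  have C6: "\<forall>i j. i \<notin> P \<and> j \<notin> P \<and> i \<noteq> j \<longrightarrow> S$i$j = 0"
    using colz by blast
  have UT: "\<forall>i j. j < i \<longrightarrow> S$i$j = 0"
    using C2 C3 C6 by (metis less_irrefl)
  have C9: "\<forall>i. i \<notin> P \<longrightarrow> (adjm Q *v b)$i = 0"
  proof (intro allI impI)
    fix i assume iP: "i \<notin> P"
    let ?e = "axis i (1::complex)"
    define w where "w = Q *v ?e"
    have wr: "w$r = Q$r$i" for r by (simp add: w_def mv_axis)
    have vi: "(adjm Q *v b)$i = cinner b w"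
      by (simp add: wr cinner_def matrix_vector_mult_def adjm_def mult.commute)
    have QS: "Q ** adjm S = adjm A ** Q"
    proof -
      have "Q ** adjm S = (Q ** adjm Q) ** (adjm A ** Q)" by (simp add: adjS matrix_mul_assoc)
      thus ?thesis by (simp add: U2 matrix_mul_lid)
    qed
    have "adjm A *v w = Q *v (adjm S *v ?e)"
      by (simp add: w_def matrix_vector_mul_assoc QS)
    hence "norm (adjm A *v w) = norm (adjm S *v ?e)" by (simp add: unitary_norm[OF U1])
    also have "\<dots> = 1"
    proof (rule antisym)
      show "norm (adjm S *v ?e) \<le> 1" using cSa[of ?e] by (simp add: norm_axis1)
      have "cmod ((adjm S *v ?e)$i) = 1" using diag1[of i] iP by (simp add: mv_axis adjm_comp)
      thus "1 \<le> norm (adjm S *v ?e)" using cmod_comp_le[of "adjm S *v ?e" i] by simp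
    qed
    also have "\<dots> = norm w" by (simp add: w_def unitary_norm[OF U1] norm_axis1)
    finally show "(adjm Q *v b)$i = 0" using bc vi by simp
  qed
  have D1: "\<forall>i. i \<notin> P \<longleftrightarrow> cmod (S$i$i) = 1" using diag1 by blast
  have D2: "\<forall>i. cmod (S$i$i) \<le> 1" using dle by blast
  have fin: "adjm Q ** Q = mat 1 \<and> Q ** adjm Q = mat 1 \<and>
    (\<forall>i\<in>P. \<forall>j. j \<notin> P \<longrightarrow> i < j) \<and>
    (\<forall>i j. j < i \<longrightarrow> (adjm Q ** A ** Q)$i$j = 0) \<and>
    (\<forall>i j. (i \<in> P \<and> j \<notin> P) \<or> (i \<notin> P \<and> j \<in> P) \<longrightarrow> (adjm Q ** A ** Q)$i$j = 0) \<and>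
    (\<forall>i j. i \<notin> P \<and> j \<notin> P \<and> i \<noteq> j \<longrightarrow> (adjm Q ** A ** Q)$i$j = 0) \<and>
    (\<forall>i. i \<notin> P \<longleftrightarrow> cmod ((adjm Q ** A ** Q)$i$i) = 1) \<and>
    (\<forall>i. cmod ((adjm Q ** A ** Q)$i$i) \<le> 1) \<and>
    (\<forall>i. i \<notin> P \<longrightarrow> (adjm Q *v b)$i = 0)"
    using U1 U2 C1 UT C2 C6 D1 D2 C9 unfolding S_def by (intro conjI)
  show ?thesis by (rule exI[where x=Q], rule exI[where x=P], rule fin)
qed


definition PM :: "complex^'m::finite^'n::finite \<Rightarrow> complex poly^'m^'n" where
  "PM M = (\<chi> i j. [:M$i$j:])"

lemma const_poly_add: "[:a + b:] = [:a:] + [:b:]" by simp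

lemma const_poly_sum: "[:sum f A:] = (\<Sum>x\<in>A. [:f x:])"
proof (induct A rule: infinite_finite_induct)
  case (insert x F)
  then show ?case by (simp add: const_poly_add)
qed auto

lemma PM_mult: "PM (M ** N) = PM M ** PM N"
  by (simp add: PM_def matrix_matrix_mult_def vec_eq_iff const_poly_sum mult_to_poly mult_ac)

lemma PM_mat1: "PM (mat 1) = mat 1"
  by (simp add: PM_def mat_def vec_eq_iff one_pCons)

lemma mm_diff_left: "(M :: 'a::comm_ring_1^'k::finite^'n::finite) ** (N1 - N2) = M ** N1 - M ** (N2::'a^'m::finite^'k)"
  by (simp add: matrix_matrix_mult_def vec_eq_iff sum_subtractf algebra_simps)

lemma mm_diff_right: "((N1::'a::comm_ring_1^'k::finite^'n::finite) - N2) ** M = N1 ** M - N2 ** (M::'a^'m::finite^'k)"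
  by (simp add: matrix_matrix_mult_def vec_eq_iff sum_subtractf algebra_simps)

lemma mm_mat_right: "(M :: 'a::comm_ring_1^'k::finite^'n::finite) ** mat c = (\<chi> i j. M$i$j * c)"
  by (simp add: matrix_matrix_mult_def vec_eq_iff mat_def if_distrib cong: if_cong)

lemma mm_scal_left: "(\<chi> i k. (M :: 'a::comm_ring_1^'k::finite^'n::finite)$i$k * c) ** (N::'a^'m::finite^'k) = (\<chi> i j. (M ** N)$i$j * c)"
  by (simp add: matrix_matrix_mult_def vec_eq_iff sum_distrib_right sum_distrib_left mult_ac)

lemma charpoly_alt: "charpoly A = det (mat [:0,1:] - PM A)"
  unfolding charpoly_def by (rule arg_cong[where f=det]) (simp add: vec_eq_iff mat_def PM_def)

lemma charpoly_similar:
  fixes A Q :: "complex^'n::finite^'n"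
  assumes U1: "adjm Q ** Q = mat 1"
  shows "charpoly (adjm Q ** A ** Q) = charpoly A"
proof -
  let ?X = "[:0,1:] :: complex poly"
  have e: "PM (adjm Q) ** (mat ?X - PM A) ** PM Q = mat ?X - PM (adjm Q ** A ** Q)"
  proof -
    have "PM (adjm Q) ** mat ?X ** PM Q = mat ?X"
    proof -
      have I1: "PM (adjm Q) ** PM Q = mat 1" by (simp add: PM_mult[symmetric] U1 PM_mat1)
      have "PM (adjm Q) ** mat ?X ** PM Q = (\<chi> i j. (PM (adjm Q) ** PM Q)$i$j * ?X)"
        by (simp only: mm_mat_right mm_scal_left)
      also have "\<dots> = mat ?X" by (simp add: I1 mat_def vec_eq_iff)
      finally show ?thesis .
    qed
    thus ?thesis by (simp add: mm_diff_left mm_diff_right PM_mult)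
  qed
  have d: "det (PM (adjm Q)) * det (PM Q) = 1"
    by (simp add: det_mul[symmetric] PM_mult[symmetric] U1 PM_mat1 det_I)
  have "charpoly (adjm Q ** A ** Q) = det (PM (adjm Q) ** (mat ?X - PM A) ** PM Q)"
    by (simp add: charpoly_alt e)
  also have "\<dots> = det (PM (adjm Q)) * det (PM Q) * det (mat ?X - PM A)"
    by (simp add: det_mul mult_ac)
  also have "\<dots> = charpoly A" using d by (simp add: charpoly_alt)
  finally show ?thesis .
qed

lemma perm_exists_lt:
  fixes p :: "'n::{finite,linorder} \<Rightarrow> 'n"
  assumes p: "p permutes UNIV" and pid: "p \<noteq> id"
  shows "\<exists>i. p i < i"
proof (rule ccontr)
  assume "\<not> ?thesis"
  hence ge: "i \<le> p i" for i by (simp add: not_less)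
  let ?D = "{i. p i \<noteq> i}"
  have "?D \<noteq> {}" using pid by (auto simp: fun_eq_iff)
  then obtain m where m: "m = Max ?D" "m \<in> ?D" by (metis Max_in finite)
  have gt: "p m > m" using ge[of m] m(2) by auto
  have "p m \<in> ?D"
  proof (rule ccontr)
    assume "p m \<notin> ?D"
    hence "p (p m) = p m" by simp
    hence "p m = m" using permutes_inj[OF p] by (simp add: inj_eq)
    thus False using m(2) by simp
  qed
  hence "p m \<le> m" using m(1) by simp
  thus False using gt by simp
qed

lemma det_upper:
  fixes A :: "(('a::comm_ring_1, 'n::{finite,linorder}) vec, 'n) vec"
  assumes ld: "\<And>i j. j < i \<Longrightarrow> A$i$j = 0"
  shows "det A = (\<Prod>i\<in>UNIV. A$i$i)"
proof -
  have "det A = (\<Sum>p\<in>{id}. of_int (sign p) * (\<Prod>i\<in>UNIV. A $ i $ p i))"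
    unfolding det_def
  proof (rule sum.mono_neutral_right)
    show "{id} \<subseteq> {p. p permutes (UNIV::'n set)}" by (simp add: permutes_id)
    show "\<forall>p\<in>{p. p permutes (UNIV::'n set)} - {id}. of_int (sign p) * (\<Prod>i\<in>UNIV. A $ i $ p i) = 0"
    proof
      fix p assume "p \<in> {p. p permutes (UNIV::'n set)} - {id}"
      then obtain i where "p i < i" using perm_exists_lt by blast
      hence "A $ i $ p i = 0" by (rule ld)
      hence "(\<Prod>i\<in>UNIV. A $ i $ p i) = 0" by (intro prod_zero) auto
      thus "of_int (sign p) * (\<Prod>i\<in>UNIV. A $ i $ p i) = 0" by simp
    qed
  qed (simp add: finite_permutations)
  thus ?thesis by (simp add: sign_id)
qed

lemma charpoly_upper:
  fixes S :: "((complex, 'n::{finite,linorder}) vec, 'n) vec"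
  assumes ut: "\<And>i j. j < i \<Longrightarrow> S$i$j = 0"
  shows "charpoly S = (\<Prod>i\<in>UNIV. [:- S$i$i, 1:])"
  unfolding charpoly_def
  by (subst det_upper) (auto simp: ut)

lemma order_lin: "order c [:-a, 1:] = (if a = c then 1 else 0)"
proof (cases "a = c")
  case True
  then show ?thesis using order_power_n_n[of c 1] by simp
next
  case False
  then show ?thesis by (simp add: order_0I)
qed

lemma order_prod_lin:
  fixes s :: "'i \<Rightarrow> complex"
  assumes "finite I"
  shows "order c (\<Prod>i\<in>I. [:- s i, 1:]) = card {i\<in>I. s i = c}"
  using assms
proof (induct I rule: finite_induct)
  case empty
  then show ?case by (simp add: order_0I)
next
  case (insert x F)
  have nz: "(\<Prod>i\<in>F. [:- s i, 1:]) \<noteq> 0" using insert(1) by (simp add: prod_zero_iff)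
  have ne: "[:- s x, 1:] * (\<Prod>i\<in>F. [:- s i, 1:]) \<noteq> 0"
    using nz by (metis mult_eq_0_iff pCons_eq_0_iff one_neq_zero)
  have "order c (\<Prod>i\<in>insert x F. [:- s i, 1:]) = order c [:- s x, 1:] + order c (\<Prod>i\<in>F. [:- s i, 1:])"
    unfolding prod.insert[OF insert(1,2)] by (rule order_mult[OF ne])
  also have "\<dots> = (if s x = c then 1 else 0) + card {i\<in>F. s i = c}" by (simp add: order_lin insert(3))
  also have "\<dots> = card {i\<in>insert x F. s i = c}"
  proof (cases "s x = c")
    case True
    hence "{i\<in>insert x F. s i = c} = insert x {i\<in>F. s i = c}" by auto
    thus ?thesis using True insert(1,2) by simp
  next
    case False
    hence "{i\<in>insert x F. s i = c} = {i\<in>F. s i = c}" by auto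
    thus ?thesis using False by simp
  qed
  finally show ?case .
qed

lemma alg_mult_upper:
  fixes S A :: "((complex, 'n::{finite,linorder}) vec, 'n) vec"
  assumes ut: "\<And>i j. j < i \<Longrightarrow> S$i$j = 0" and cp: "charpoly A = charpoly S"
  shows "alg_mult A c = card {i. S$i$i = c}"
  by (simp add: alg_mult_def cp charpoly_upper[OF ut] order_prod_lin)


lemma linear_cont_meas:
  fixes f :: "'a::euclidean_space \<Rightarrow> 'b::euclidean_space"
  assumes "linear f" shows "f \<in> borel_measurable borel" "continuous_on UNIV f"
  using assms by (auto intro!: borel_measurable_continuous_onI linear_continuous_on simp: linear_conv_bounded_linear)

lemma lborel_basis_map:
  fixes h :: "'a::euclidean_space \<Rightarrow> 'b::euclidean_space"
  assumes bij: "bij_betw h Basis Basis"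
  shows "distr lborel borel (\<lambda>x. \<Sum>b\<in>Basis. (x \<bullet> b) *\<^sub>R h b) = lborel"
proof -
  define E where "E = (\<lambda>x::'a. \<Sum>b\<in>Basis. (x \<bullet> b) *\<^sub>R h b)"
  have inj: "inj_on h Basis" using bij by (rule bij_betw_imp_inj_on)
  have hB: "h b \<in> Basis" if "b \<in> Basis" for b using bij that by (auto simp: bij_betw_def)
  have Eh: "E x \<bullet> h b = x \<bullet> b" if b: "b \<in> Basis" for x b
  proof -
    have "E x \<bullet> h b = (\<Sum>b'\<in>Basis. (x \<bullet> b') * (h b' \<bullet> h b))"
      by (simp add: E_def inner_sum_left)
    also have "\<dots> = (\<Sum>b'\<in>Basis. if b' = b then x \<bullet> b' else 0)"
      using inj b hB by (intro sum.cong refl) (auto simp: inner_Basis inj_on_eq_iff)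
    also have "\<dots> = x \<bullet> b" using b by simp
    finally show ?thesis .
  qed
  have lin: "linear E" unfolding E_def
    by (simp add: linear_iff inner_add_left scaleR_add_left sum.distrib scaleR_sum_right)
  note m = linear_cont_meas[OF lin]
  show ?thesis unfolding E_def[symmetric]
  proof (rule lborel_eqI[symmetric])
    show "sets (distr lborel borel E) = sets borel" by simp
    fix l u :: 'b assume lu: "\<And>b. b \<in> Basis \<Longrightarrow> l \<bullet> b \<le> u \<bullet> b"
    define l' where "l' = (\<Sum>b\<in>(Basis::'a set). (l \<bullet> h b) *\<^sub>R b)"
    define u' where "u' = (\<Sum>b\<in>(Basis::'a set). (u \<bullet> h b) *\<^sub>R b)"
    have l'b: "l' \<bullet> b = l \<bullet> h b" if "b \<in> Basis" for b
      using that by (simp add: l'_def inner_sum_left inner_Basis if_distrib cong: if_cong)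
    have u'b: "u' \<bullet> b = u \<bullet> h b" if "b \<in> Basis" for b
      using that by (simp add: u'_def inner_sum_left inner_Basis if_distrib cong: if_cong)
    have pre: "E -` box l u = box l' u'"
    proof -
      have "E x \<in> box l u \<longleftrightarrow> x \<in> box l' u'" for x
      proof -
        have "E x \<in> box l u \<longleftrightarrow> (\<forall>b'\<in>Basis. l \<bullet> b' < E x \<bullet> b' \<and> E x \<bullet> b' < u \<bullet> b')"
          by (simp add: mem_box)
        also have "\<dots> \<longleftrightarrow> (\<forall>b\<in>Basis. l \<bullet> h b < E x \<bullet> h b \<and> E x \<bullet> h b < u \<bullet> h b)"
          using bij by (metis (no_types, lifting) bij_betw_def imageE image_eqI)
        also have "\<dots> \<longleftrightarrow> x \<in> box l' u'" by (simp add: mem_box Eh l'b u'b)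
        finally show ?thesis .
      qed
      thus ?thesis by auto
    qed
    have "emeasure (distr lborel borel E) (box l u) = emeasure lborel (E -` box l u)"
      using m by (subst emeasure_distr) auto
    also have "\<dots> = emeasure lborel (box l' u')" by (simp add: pre)
    also have "\<dots> = ennreal (\<Prod>b\<in>Basis. (u' - l') \<bullet> b)"
      by (rule emeasure_lborel_box) (simp add: l'b u'b lu hB)
    also have "(\<Prod>b\<in>Basis. (u' - l') \<bullet> b) = (\<Prod>b\<in>Basis. (u - l) \<bullet> h b)"
      by (intro prod.cong refl) (simp add: inner_diff_left l'b u'b)
    also have "\<dots> = (\<Prod>b\<in>Basis. (u - l) \<bullet> b)" by (rule prod.reindex_bij_betw[OF bij])
    finally show "emeasure (distr lborel borel E) (box l u) = ennreal (\<Prod>b\<in>Basis. (u - l) \<bullet> b)" .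
  qed
qed

lemma lborel_orth:
  fixes L :: "(real, 'm::{finite,wellorder}) vec \<Rightarrow> (real, 'm) vec"
  assumes L: "orthogonal_transformation L"
  shows "distr lborel borel L = lborel"
proof (rule lborel_eqI[symmetric])
  show "sets (distr lborel borel L) = sets borel" by simp
  have lin: "linear L" using L by (rule orthogonal_transformation_linear)
  note m = linear_cont_meas[OF lin]
  fix l u :: "(real, 'm) vec" assume lu: "\<And>b. b \<in> Basis \<Longrightarrow> l \<bullet> b \<le> u \<bullet> b"
  let ?B = "box l u"
  define L' where "L' = inv L"
  have L': "orthogonal_transformation L'" unfolding L'_def by (rule orthogonal_transformation_inv[OF L])
  have pre: "L -` ?B = L' ` ?B"
    unfolding L'_def by (rule bij_vimage_eq_inv_image[OF orthogonal_transformation_bij[OF L]])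
  have Bl: "?B \<in> lmeasurable" by (rule lmeasurable_open) auto
  have openpre: "open (L -` ?B)" by (rule open_vimage) (auto simp: m)
  have bnd: "bounded (L' ` ?B)"
    by (rule bounded_linear_image) (use orthogonal_transformation_linear[OF L'] in \<open>auto simp: linear_conv_bounded_linear\<close>)
  have "measure lborel (L' ` ?B) = measure lebesgue (L' ` ?B)"
    using openpre pre by (simp add: borel_open)
  also have "\<dots> = measure lebesgue ?B" by (rule measure_orthogonal_image[OF L' Bl])
  also have "\<dots> = measure lborel ?B" by simp
  finally have mm: "measure lborel (L' ` ?B) = measure lborel ?B" .
  have "emeasure (distr lborel borel L) ?B = emeasure lborel (L -` ?B)"
    using m by (subst emeasure_distr) auto
  also have "\<dots> = ennreal (measure lborel (L' ` ?B))"
    unfolding pre by (rule emeasure_eq_ennreal_measure) (use emeasure_bounded_finite[OF bnd] in auto)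
  also have "\<dots> = ennreal (measure lborel ?B)" by (simp add: mm)
  also have "\<dots> = emeasure lborel ?B"
    by (rule emeasure_eq_ennreal_measure[symmetric]) (use emeasure_bounded_finite[of ?B] in auto)
  also have "\<dots> = ennreal (\<Prod>b\<in>Basis. (u - l) \<bullet> b)" by (rule emeasure_lborel_box[OF lu])
  finally show "emeasure (distr lborel borel L) ?B = ennreal (\<Prod>b\<in>Basis. (u - l) \<bullet> b)" .
qed


lemma basis_map_inner:
  fixes h :: "'a::euclidean_space \<Rightarrow> 'b::euclidean_space"
  assumes bij: "bij_betw h Basis Basis" and b: "b \<in> Basis"
  shows "(\<Sum>b'\<in>Basis. (x \<bullet> b') *\<^sub>R h b') \<bullet> h b = x \<bullet> b"
proof -
  have inj: "inj_on h Basis" using bij by (rule bij_betw_imp_inj_on)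
  have hB: "h b \<in> Basis" if "b \<in> Basis" for b using bij that by (auto simp: bij_betw_def)
  have "(\<Sum>b'\<in>Basis. (x \<bullet> b') *\<^sub>R h b') \<bullet> h b = (\<Sum>b'\<in>Basis. (x \<bullet> b') * (h b' \<bullet> h b))"
    by (simp add: inner_sum_left)
  also have "\<dots> = (\<Sum>b'\<in>Basis. if b' = b then x \<bullet> b' else 0)"
    using inj b hB by (intro sum.cong refl) (auto simp: inner_Basis inj_on_eq_iff)
  also have "\<dots> = x \<bullet> b" using b by simp
  finally show ?thesis .
qed

lemma basis_map_inner2:
  fixes h :: "'a::euclidean_space \<Rightarrow> 'b::euclidean_space"
  assumes bij: "bij_betw h Basis Basis"
  shows "(\<Sum>b\<in>Basis. (x \<bullet> b) *\<^sub>R h b) \<bullet> (\<Sum>b\<in>Basis. (y \<bullet> b) *\<^sub>R h b) = x \<bullet> y"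
proof -
  have "(\<Sum>b\<in>Basis. (x \<bullet> b) *\<^sub>R h b) \<bullet> (\<Sum>b\<in>Basis. (y \<bullet> b) *\<^sub>R h b)
      = (\<Sum>b\<in>Basis. (y \<bullet> b) * ((\<Sum>b\<in>Basis. (x \<bullet> b) *\<^sub>R h b) \<bullet> h b))"
    by (simp add: inner_sum_right)
  also have "\<dots> = (\<Sum>b\<in>Basis. (y \<bullet> b) * (x \<bullet> b))"
    by (intro sum.cong refl) (simp add: basis_map_inner[OF bij])
  also have "\<dots> = x \<bullet> y" using euclidean_inner[of x y] by (simp add: mult.commute)
  finally show ?thesis .
qed

lemma basis_map_linear: "linear (\<lambda>x. \<Sum>b\<in>Basis. (x \<bullet> b) *\<^sub>R (h b :: 'b::real_vector))"
  by (simp add: linear_iff inner_add_left scaleR_add_left sum.distrib scaleR_sum_right)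

lemma basis_map_inv:
  fixes h :: "'a::euclidean_space \<Rightarrow> 'b::euclidean_space"
  assumes bij: "bij_betw h Basis Basis"
  shows "(\<Sum>b\<in>Basis. ((\<Sum>b'\<in>Basis. (x \<bullet> b') *\<^sub>R h b') \<bullet> b) *\<^sub>R inv_into Basis h b) = x"
proof (rule euclidean_eqI)
  fix b :: 'a assume b: "b \<in> Basis"
  have bij': "bij_betw (inv_into Basis h) Basis Basis" by (rule bij_betw_inv_into[OF bij])
  have hb: "h b \<in> Basis" using bij b by (auto simp: bij_betw_def)
  have "inv_into Basis h (h b) = b" using bij b by (simp add: bij_betw_def)
  hence "(\<Sum>b'\<in>Basis. ((\<Sum>b'\<in>Basis. (x \<bullet> b') *\<^sub>R h b') \<bullet> b') *\<^sub>R inv_into Basis h b') \<bullet> b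
       = (\<Sum>b'\<in>Basis. (x \<bullet> b') *\<^sub>R h b') \<bullet> h b"
    using basis_map_inner[OF bij' hb] by simp
  also have "\<dots> = x \<bullet> b" by (rule basis_map_inner[OF bij b])
  finally show "(\<Sum>b\<in>Basis. ((\<Sum>b'\<in>Basis. (x \<bullet> b') *\<^sub>R h b') \<bullet> b) *\<^sub>R inv_into Basis h b) \<bullet> b = x \<bullet> b" .
qed

lemma inner_cvec: "(x::complex^'n::finite) \<bullet> y = Re (cinner x y)"
  by (simp add: inner_vec_def cinner_def inner_complex_def)

lemma mv_linear: "linear (\<lambda>z. (Q::complex^'n::finite^'m::finite) *v z)"
  by (simp add: linear_iff mv_add scaleR_as_smult vector_scalar_commute)

lemma unitary_distr:
  fixes Q :: "((complex, 'n::finite) vec, 'n) vec"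
  assumes U: "adjm Q ** Q = mat 1"
  shows "distr lborel borel (\<lambda>z. Q *v z) = lborel"
proof -
  have "finite (Basis :: (complex^'n) set)" "finite (Basis :: (real^('n bit0)) set)" by auto
  moreover have "card (Basis :: (complex^'n) set) = card (Basis :: (real^('n bit0)) set)"
    by (simp add: card_bit0)
  ultimately obtain h :: "complex^'n \<Rightarrow> real^('n bit0)" where bij: "bij_betw h Basis Basis"
    using finite_same_card_bij by blast
  define hi where "hi = inv_into Basis h"
  have bij': "bij_betw hi Basis Basis" unfolding hi_def by (rule bij_betw_inv_into[OF bij])
  define E where "E = (\<lambda>x::complex^'n. \<Sum>b\<in>Basis. (x \<bullet> b) *\<^sub>R h b)"
  define E' where "E' = (\<lambda>y::real^('n bit0). \<Sum>b\<in>Basis. (y \<bullet> b) *\<^sub>R hi b)"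
  have E'E: "E' (E x) = x" for x unfolding E_def E'_def hi_def by (rule basis_map_inv[OF bij])
  have lE: "linear E" "linear E'" unfolding E_def E'_def by (rule basis_map_linear)+
  have iE: "E x \<bullet> E y = x \<bullet> y" for x y unfolding E_def by (rule basis_map_inner2[OF bij])
  have iE': "E' x \<bullet> E' y = x \<bullet> y" for x y unfolding E'_def by (rule basis_map_inner2[OF bij'])
  have iQ: "(Q *v x) \<bullet> (Q *v y) = x \<bullet> y" for x y
    by (simp add: inner_cvec cinner_adj matrix_vector_mul_assoc U)
  define L where "L = (\<lambda>v. E (Q *v E' v))"
  have linL: "linear L" unfolding L_def
    using linear_compose[OF linear_compose[OF lE(2) mv_linear] lE(1)] by (simp add: o_def)
  have oL: "orthogonal_transformation L"
    unfolding orthogonal_transformation_def using linL by (simp add: L_def iE iQ iE')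
  have dL: "distr lborel borel L = lborel" by (rule lborel_orth[OF oL])
  have dE': "distr lborel borel E' = lborel" unfolding E'_def by (rule lborel_basis_map[OF bij'])
  note mE' = linear_cont_meas(1)[OF lE(2)]
  note mL = linear_cont_meas(1)[OF linL]
  note mQ = linear_cont_meas(1)[OF mv_linear[of Q]]
  have comp: "(\<lambda>z. Q *v z) \<circ> E' = E' \<circ> L" by (simp add: fun_eq_iff L_def E'E)
  have "distr lborel borel (\<lambda>z. Q *v z) = distr (distr lborel borel E') borel (\<lambda>z. Q *v z)"
    by (simp add: dE')
  also have "\<dots> = distr lborel borel ((\<lambda>z. Q *v z) \<circ> E')"
    by (rule distr_distr) (use mQ mE' in simp_all)
  also have "\<dots> = distr lborel borel (E' \<circ> L)" by (simp add: comp)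
  also have "\<dots> = distr (distr lborel borel L) borel E'"
    by (rule distr_distr[symmetric]) (use mL mE' in simp_all)
  also have "\<dots> = lborel" by (simp add: dL dE')
  finally show ?thesis .
qed


lemma entire_comp_lin:
  fixes Q :: "((complex, 'n::finite) vec, 'n) vec"
  assumes "entire_fun f"
  shows "entire_fun (\<lambda>z. f (Q *v z))"
  unfolding entire_fun_def
proof
  fix z
  from assms obtain g :: "complex^'n" where g: "(f has_derivative (\<lambda>h. \<Sum>i\<in>UNIV. g$i * h$i)) (at (Q *v z))"
    unfolding entire_fun_def by blast
  have d: "((\<lambda>z. f (Q *v z)) has_derivative (\<lambda>h. \<Sum>i\<in>UNIV. g$i * (Q *v h)$i)) (at z)"
    by (rule has_derivative_compose[OF linear_imp_has_derivative[OF mv_linear] g])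
  define g' where "g' = (\<chi> j. \<Sum>i\<in>UNIV. g$i * Q$i$j)"
  have "(\<lambda>h. \<Sum>i\<in>UNIV. g$i * (Q *v h)$i) = (\<lambda>h. \<Sum>j\<in>UNIV. g'$j * h$j)"
  proof
    fix h :: "complex^'n"
    have "(\<Sum>i\<in>UNIV. g$i * (Q *v h)$i) = (\<Sum>i\<in>UNIV. \<Sum>j\<in>UNIV. g$i * Q$i$j * h$j)"
      by (simp add: matrix_vector_mult_def sum_distrib_left mult.assoc)
    also have "\<dots> = (\<Sum>j\<in>UNIV. \<Sum>i\<in>UNIV. g$i * Q$i$j * h$j)" by (rule sum.swap)
    also have "\<dots> = (\<Sum>j\<in>UNIV. g'$j * h$j)" by (simp add: g'_def sum_distrib_right)
    finally show "(\<Sum>i\<in>UNIV. g$i * (Q *v h)$i) = (\<Sum>j\<in>UNIV. g'$j * h$j)" .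
  qed
  with d show "\<exists>g::complex^'n. ((\<lambda>z. f (Q *v z)) has_derivative (\<lambda>h. \<Sum>i\<in>UNIV. g$i * h$i)) (at z)"
    by auto
qed

lemma unitary_comp_bounded:
  fixes Q :: "((complex, 'n::finite) vec, 'n) vec"
  assumes U1: "adjm Q ** Q = mat 1" and U2: "Q ** adjm Q = mat 1"
  shows "bounded_fock_op (comp_op (\<lambda>z. Q *v z))"
proof -
  have dQ: "distr lborel borel (\<lambda>z. Q *v z) = lborel" by (rule unitary_distr[OF U1])
  have mQ: "(\<lambda>z. Q *v z) \<in> lborel \<rightarrow>\<^sub>M borel"
    using linear_cont_meas(1)[OF mv_linear[of Q]] by (simp add: measurable_lborel2)
  define G where "G = (\<lambda>f::complex^'n \<Rightarrow> complex. \<lambda>z::complex^'n. (cmod (f z))^2 * exp (- ((norm z)^2 / 2)))"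
  have Gc: "G (comp_op (\<lambda>z. Q *v z) f) = (\<lambda>z. G f (Q *v z))" for f
    by (simp add: G_def comp_op_def unitary_norm[OF U1])
  have key: "integrable lborel (G (comp_op (\<lambda>z. Q *v z) f)) \<and>
             integral\<^sup>L lborel (G (comp_op (\<lambda>z. Q *v z) f)) = integral\<^sup>L lborel (G f)"
    if f: "integrable lborel (G f)" for f
  proof -
    have mG: "G f \<in> borel_measurable borel"
      using borel_measurable_integrable[OF f] by (simp add: measurable_lborel2)
    have "integrable lborel (\<lambda>z. G f (Q *v z))"
      using f integrable_distr_eq[OF mQ mG] dQ by simp
    moreover have "integral\<^sup>L lborel (\<lambda>z. G f (Q *v z)) = integral\<^sup>L lborel (G f)"
      using integral_distr[OF mQ mG] dQ by simp
    ultimately show ?thesis by (simp add: Gc)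
  qed
  have infock: "comp_op (\<lambda>z. Q *v z) f \<in> fock" if "f \<in> fock" for f
    using that key[of f] entire_comp_lin[of f Q]
    unfolding fock_def G_def by (simp add: comp_op_def o_def)
  have nrm: "fock_norm (comp_op (\<lambda>z. Q *v z) f) = fock_norm f" if "f \<in> fock" for f
    using that key[of f] unfolding fock_def fock_norm_def G_def by simp
  show ?thesis unfolding bounded_fock_op_def
  proof (intro conjI ballI allI)
    show "\<And>f. f \<in> fock \<Longrightarrow> comp_op ((*v) Q) f \<in> fock" using infock by simp
    show "\<And>f g. f \<in> fock \<Longrightarrow> g \<in> fock \<Longrightarrow> comp_op ((*v) Q) (\<lambda>z. f z + g z) = (\<lambda>z. comp_op ((*v) Q) f z + comp_op ((*v) Q) g z)"
      by (simp add: comp_op_def o_def)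
    show "\<And>c f. f \<in> fock \<Longrightarrow> comp_op ((*v) Q) (\<lambda>z. c * f z) = (\<lambda>z. c * comp_op ((*v) Q) f z)"
      by (simp add: comp_op_def o_def)
    show "\<exists>K. \<forall>f\<in>fock. fock_norm (comp_op ((*v) Q) f) \<le> K * fock_norm f"
      by (rule exI[of _ 1]) (simp add: nrm)
  qed
qed


lemma gauss_1d: "(\<integral>\<^sup>+x. ennreal (exp (- x\<^sup>2 / 2)) \<partial>lborel) = ennreal (sqrt (2*pi))"
proof -
  have e: "ennreal (exp (- x\<^sup>2 / 2)) = ennreal (sqrt (2*pi)) * ennreal (normal_density 0 1 x)" for x
    by (subst ennreal_mult[symmetric]) (auto simp: normal_density_def)
  have "(\<integral>\<^sup>+x. ennreal (exp (- x\<^sup>2 / 2)) \<partial>lborel) = ennreal (sqrt (2*pi)) * (\<integral>\<^sup>+x. ennreal (normal_density 0 1 x) \<partial>lborel)"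
    unfolding e by (rule nn_integral_cmult) measurable
  also have "(\<integral>\<^sup>+x. ennreal (normal_density 0 1 x) \<partial>lborel) = 1"
    using nn_integral_eq_integral[OF integrable_normal_density[of 1 0]] by simp
  finally show ?thesis by simp
qed

lemma norm_sq_basis: "(norm (z::'a::euclidean_space))\<^sup>2 = (\<Sum>b\<in>Basis. (z \<bullet> b)\<^sup>2)"
  unfolding power2_norm_eq_inner by (subst euclidean_inner) (simp add: power2_eq_square)

lemma gauss_nn: "(\<integral>\<^sup>+z. ennreal (exp (- (norm z)\<^sup>2 / 2)) \<partial>(lborel::'a::euclidean_space measure)) = ennreal (sqrt (2*pi) ^ DIM('a))"
proof -
  have e: "ennreal (exp (- (norm z)\<^sup>2 / 2)) = (\<Prod>b\<in>Basis. ennreal (exp (- (z \<bullet> b)\<^sup>2 / 2)))" for z :: 'a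
  proof -
    have "exp (- (norm z)\<^sup>2 / 2) = exp (\<Sum>b\<in>Basis. - (z \<bullet> b)\<^sup>2 / 2)"
      by (simp add: norm_sq_basis sum_negf sum_divide_distrib)
    also have "\<dots> = (\<Prod>b\<in>Basis. exp (- (z \<bullet> b)\<^sup>2 / 2))" by (simp add: exp_sum)
    finally show ?thesis by (simp add: prod_ennreal)
  qed
  have "(\<integral>\<^sup>+z. ennreal (exp (- (norm z)\<^sup>2 / 2)) \<partial>(lborel::'a measure))
      = (\<integral>\<^sup>+z. (\<Prod>b\<in>Basis. ennreal (exp (- (z \<bullet> b)\<^sup>2 / 2))) \<partial>(lborel::'a measure))"
    by (simp only: e)
  also have "\<dots> = (\<Prod>b\<in>(Basis::'a set). \<integral>\<^sup>+x. ennreal (exp (- x\<^sup>2 / 2)) \<partial>lborel)"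
    using nn_integral_lborel_prod[of "\<lambda>b x. ennreal (exp (- x\<^sup>2 / 2))"] by simp
  also have "\<dots> = ennreal (sqrt (2*pi) ^ DIM('a))"
    by (simp only: gauss_1d) (simp add: ennreal_power)
  finally show ?thesis .
qed

lemma gauss_int:
  shows "integrable lborel (\<lambda>z::'a::euclidean_space. exp (- (norm z)\<^sup>2 / 2))"
    and "integral\<^sup>L lborel (\<lambda>z::'a::euclidean_space. exp (- (norm z)\<^sup>2 / 2)) = sqrt (2*pi) ^ DIM('a)"
proof -
  show i: "integrable lborel (\<lambda>z::'a::euclidean_space. exp (- (norm z)\<^sup>2 / 2))"
    by (rule integrableI_nn_integral_finite[OF _ _ gauss_nn]) auto
  have "(\<integral>\<^sup>+z. ennreal (exp (- (norm z)\<^sup>2 / 2)) \<partial>(lborel::'a measure)) = ennreal (integral\<^sup>L lborel (\<lambda>z::'a. exp (- (norm z)\<^sup>2 / 2)))"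
    by (rule nn_integral_eq_integral[OF i]) simp
  hence e: "ennreal (integral\<^sup>L lborel (\<lambda>z::'a. exp (- (norm z)\<^sup>2 / 2))) = ennreal (sqrt (2*pi) ^ DIM('a))"
    using gauss_nn[where 'a='a] by simp
  have nn: "0 \<le> integral\<^sup>L lborel (\<lambda>z::'a. exp (- (norm z)\<^sup>2 / 2))" by (rule integral_nonneg_AE) simp
  show "integral\<^sup>L lborel (\<lambda>z::'a::euclidean_space. exp (- (norm z)\<^sup>2 / 2)) = sqrt (2*pi) ^ DIM('a)"
    using e nn ennreal_inj by force
qed

lemma gauss_shift:
  fixes w :: "'a::euclidean_space"
  shows "integrable lborel (\<lambda>z. exp (- (norm (z - w))\<^sup>2 / 2))"
    and "integral\<^sup>L lborel (\<lambda>z. exp (- (norm (z - w))\<^sup>2 / 2)) = sqrt (2*pi) ^ DIM('a)"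
proof -
  let ?g = "\<lambda>z::'a. exp (- (norm z)\<^sup>2 / 2)"
  have mg: "?g \<in> borel_measurable borel" by measurable
  have mt: "((+) (-w)) \<in> lborel \<rightarrow>\<^sub>M borel" by (simp add: measurable_lborel2)
  have eq: "(\<lambda>z. ?g (-w + z)) = (\<lambda>z. exp (- (norm (z - w))\<^sup>2 / 2))" by (simp add: fun_eq_iff)
  have d: "distr lborel borel ((+) (-w)) = lborel" by (rule lborel_distr_plus)
  have "integrable lborel (\<lambda>z. ?g (-w + z))"
    using integrable_distr_eq[OF mt mg] gauss_int(1)[where 'a='a] by (simp only: d)
  thus "integrable lborel (\<lambda>z. exp (- (norm (z - w))\<^sup>2 / 2))" by (simp only: eq)
  have "integral\<^sup>L lborel (\<lambda>z. ?g (-w + z)) = sqrt (2*pi) ^ DIM('a)"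
    using integral_distr[OF mt mg] gauss_int(2)[where 'a='a] by (simp only: d)
  thus "integral\<^sup>L lborel (\<lambda>z. exp (- (norm (z - w))\<^sup>2 / 2)) = sqrt (2*pi) ^ DIM('a)" by (simp only: eq)
qed


definition kern :: "complex^'n::finite \<Rightarrow> complex^'n \<Rightarrow> complex" where
  "kern w z = exp (cinner z w / 2)"

lemma kern_integrand:
  "(cmod (kern w z))\<^sup>2 * exp (- ((norm z)\<^sup>2 / 2)) = exp ((norm w)\<^sup>2 / 2) * exp (- (norm (z - w))\<^sup>2 / 2)"
proof -
  have c: "cmod (kern w z) = exp ((z \<bullet> w) / 2)"
    by (simp add: kern_def norm_exp_eq_Re inner_cvec)
  have sq: "(norm (z - w))\<^sup>2 = (norm z)\<^sup>2 - 2 * (z \<bullet> w) + (norm w)\<^sup>2"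
    by (simp add: power2_norm_eq_inner inner_diff_left inner_diff_right inner_commute)
  have "(cmod (kern w z))\<^sup>2 * exp (- ((norm z)\<^sup>2 / 2)) = exp (z \<bullet> w - (norm z)\<^sup>2 / 2)"
    by (simp add: c power2_eq_square exp_add[symmetric] exp_diff)
  also have "\<dots> = exp ((norm w)\<^sup>2 / 2 + (- (norm (z - w))\<^sup>2 / 2))"
    by (rule arg_cong[where f=exp]) (simp add: sq field_simps)
  also have "\<dots> = exp ((norm w)\<^sup>2 / 2) * exp (- (norm (z - w))\<^sup>2 / 2)" by (rule exp_add)
  finally show ?thesis .
qed

lemma kern_int:
  fixes w :: "complex^'n::finite"
  shows "integrable lborel (\<lambda>z. (cmod (kern w z))\<^sup>2 * exp (- ((norm z)\<^sup>2 / 2)))"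
    and "integral\<^sup>L lborel (\<lambda>z. (cmod (kern w z))\<^sup>2 * exp (- ((norm z)\<^sup>2 / 2))) =
           exp ((norm w)\<^sup>2 / 2) * sqrt (2*pi) ^ DIM(complex^'n)"
  unfolding kern_integrand
  using gauss_shift[of w] by auto

lemma kern_entire: "entire_fun (kern (w::complex^'n::finite))"
  unfolding entire_fun_def
proof
  fix z :: "complex^'n"
  define u where "u = (\<lambda>z::complex^'n. cinner z w / 2)"
  have lu: "linear u"
    by (simp add: u_def linear_iff cinner_add_left scaleR_as_smult cinner_scale_left add_divide_distrib scaleR_conv_of_real)
  have du: "(u has_derivative u) (at z)" by (rule linear_imp_has_derivative[OF lu])
  have de: "(exp has_derivative (*) (exp (u z))) (at (u z))"
    by (rule has_field_derivative_imp_has_derivative[OF DERIV_exp])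
  have d: "((\<lambda>z. exp (u z)) has_derivative (\<lambda>h. exp (u z) * u h)) (at z)"
    by (rule has_derivative_compose[OF du de])
  define g where "g = (\<chi> i. exp (u z) * cnj (w$i) / 2)"
  have "exp (u z) * u h = (\<Sum>i\<in>UNIV. g$i * h$i)" for h
  proof -
    have "u h = (\<Sum>i\<in>UNIV. h$i * cnj (w$i) / 2)" by (simp add: u_def cinner_def sum_divide_distrib)
    thus ?thesis by (simp add: g_def sum_distrib_left mult_ac)
  qed
  hence "(\<lambda>h. exp (u z) * u h) = (\<lambda>h. \<Sum>i\<in>UNIV. g$i * h$i)" by auto
  with d show "\<exists>g::complex^'n. (kern w has_derivative (\<lambda>h. \<Sum>i\<in>UNIV. g$i * h$i)) (at z)"
  proof -
    have "kern w = (\<lambda>z. exp (u z))" by (simp add: fun_eq_iff kern_def u_def)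
    thus ?thesis using d \<open>(\<lambda>h. exp (u z) * u h) = _\<close> by auto
  qed
qed

lemma kern_fock: "kern (w::complex^'n::finite) \<in> fock"
  unfolding fock_def using kern_entire kern_int(1) by auto

lemma fock_norm_kern:
  "fock_norm (kern (w::complex^'n::finite)) = sqrt ((1 / (2*pi)) ^ CARD('n) * sqrt (2*pi) ^ DIM(complex^'n)) * exp ((norm w)\<^sup>2 / 4)"
proof -
  have "fock_norm (kern w) = sqrt ((1 / (2*pi)) ^ CARD('n) * sqrt (2*pi) ^ DIM(complex^'n) * exp ((norm w)\<^sup>2 / 2))"
    unfolding fock_norm_def kern_int(2) by (simp add: mult_ac)
  also have "\<dots> = sqrt ((1 / (2*pi)) ^ CARD('n) * sqrt (2*pi) ^ DIM(complex^'n)) * sqrt (exp ((norm w)\<^sup>2 / 2))"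
    by (simp add: real_sqrt_mult)
  also have "sqrt (exp ((norm w)\<^sup>2 / 2)) = exp ((norm w)\<^sup>2 / 4)"
  proof (rule real_sqrt_unique)
    show "(exp ((norm w)\<^sup>2 / 4))\<^sup>2 = exp ((norm w)\<^sup>2 / 2)"
      by (simp add: power2_eq_square exp_add[symmetric])
  qed simp
  finally show ?thesis .
qed

lemma fock_norm_scale: "fock_norm (\<lambda>z. c * f z) = cmod c * fock_norm f"
proof -
  have "(\<lambda>z. (cmod (c * f z))\<^sup>2 * exp (- ((norm z)\<^sup>2 / 2))) = (\<lambda>z. (cmod c)\<^sup>2 * ((cmod (f z))\<^sup>2 * exp (- ((norm z)\<^sup>2 / 2))))"
    by (simp add: fun_eq_iff norm_mult power_mult_distrib)
  thus ?thesis unfolding fock_norm_def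
    by (simp add: real_sqrt_mult mult_ac)
qed

lemma comp_kern:
  "comp_op (\<lambda>z. A *v z + b) (kern w) = (\<lambda>z. exp (cinner b w / 2) * kern (adjm A *v w) z)"
  by (simp add: fun_eq_iff comp_op_def kern_def cinner_add_left cinner_adj add_divide_distrib exp_add mult.commute)


lemma quad_bound:
  fixes a d M :: real
  assumes H: "\<And>t. t * a + t\<^sup>2 * d \<le> M"
  shows "d \<le> 0" "d = 0 \<Longrightarrow> a = 0"
proof -
  show "d \<le> 0"
  proof (rule ccontr)
    assume "\<not> d \<le> 0" hence d: "d > 0" by simp
    define t where "t = max 1 ((\<bar>a\<bar> + \<bar>M\<bar> + 1) / d)"
    have t1: "1 \<le> t" by (simp add: t_def)
    have "(\<bar>a\<bar> + \<bar>M\<bar> + 1) / d \<le> t" by (simp add: t_def)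
    hence td: "\<bar>a\<bar> + \<bar>M\<bar> + 1 \<le> t * d" using d by (simp add: divide_le_eq)
    have "t * (\<bar>a\<bar> + \<bar>M\<bar> + 1) \<le> t * (t * d)" using td t1 by (intro mult_left_mono) auto
    hence "t * (\<bar>a\<bar> + \<bar>M\<bar> + 1) \<le> t\<^sup>2 * d" by (simp add: power2_eq_square mult_ac)
    moreover have "- (t * \<bar>a\<bar>) \<le> t * a"
    proof -
      have "0 \<le> t * (a + \<bar>a\<bar>)" using t1 by (intro mult_nonneg_nonneg) auto
      thus ?thesis by (simp add: algebra_simps)
    qed
    moreover have "\<bar>M\<bar> + 1 \<le> t * (\<bar>M\<bar> + 1)" using t1 by (simp add: mult_le_cancel_right1)
    ultimately have "\<bar>M\<bar> + 1 \<le> t * a + t\<^sup>2 * d" by (simp add: algebra_simps)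
    thus False using H[of t] by simp
  qed
  assume d0: "d = 0"
  show "a = 0"
  proof (rule ccontr)
    assume a: "a \<noteq> 0"
    have "((\<bar>M\<bar> + 1) / a) * a = \<bar>M\<bar> + 1" using a by simp
    thus False using H[of "(\<bar>M\<bar> + 1) / a"] d0 by simp
  qed
qed

lemma norm_smult_c: "norm (c *s (x::complex^'n::finite)) = cmod c * norm x"
proof -
  have "(norm (c *s x))\<^sup>2 = (cmod c * norm x)\<^sup>2"
    by (simp add: norm_sq_vec norm_mult power_mult_distrib sum_distrib_left)
  thus ?thesis by (simp add: power2_eq_iff_nonneg)
qed

lemma bounded_imp_contr:
  fixes A :: "((complex, 'n::finite) vec, 'n) vec"
  assumes B: "bounded_fock_op (comp_op (\<lambda>z. A *v z + b))"
  shows "\<forall>w. norm (adjm A *v w) \<le> norm w" "\<forall>w. norm (adjm A *v w) = norm w \<longrightarrow> cinner b w = 0"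
proof -
  obtain K where K: "\<forall>f\<in>fock. fock_norm (comp_op (\<lambda>z. A *v z + b) f) \<le> K * fock_norm f"
    using B unfolding bounded_fock_op_def by blast
  define c0 where "c0 = sqrt ((1 / (2*pi)) ^ CARD('n) * sqrt (2*pi) ^ DIM(complex^'n))"
  have c0: "c0 > 0" unfolding c0_def by simp
  have ineq: "exp (Re (cinner b w) / 2) * c0 * exp ((norm (adjm A *v w))\<^sup>2 / 4) \<le> K * (c0 * exp ((norm w)\<^sup>2 / 4))" for w
  proof -
    have k: "fock_norm (comp_op (\<lambda>z. A *v z + b) (kern w)) \<le> K * fock_norm (kern w)"
      using K kern_fock[of w] by blast
    have "fock_norm (comp_op (\<lambda>z. A *v z + b) (kern w)) = cmod (exp (cinner b w / 2)) * fock_norm (kern (adjm A *v w))"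
      by (simp add: comp_kern fock_norm_scale)
    also have "\<dots> = exp (Re (cinner b w) / 2) * (c0 * exp ((norm (adjm A *v w))\<^sup>2 / 4))"
      unfolding norm_exp_eq_Re fock_norm_kern c0_def by simp
    finally have e1: "fock_norm (comp_op (\<lambda>z. A *v z + b) (kern w)) = exp (Re (cinner b w) / 2) * (c0 * exp ((norm (adjm A *v w))\<^sup>2 / 4))" .
    have e2: "fock_norm (kern w) = c0 * exp ((norm w)\<^sup>2 / 4)" unfolding fock_norm_kern c0_def ..
    have "exp (Re (cinner b w) / 2) * (c0 * exp ((norm (adjm A *v w))\<^sup>2 / 4)) \<le> K * (c0 * exp ((norm w)\<^sup>2 / 4))"
      using k unfolding e1 e2 .
    thus ?thesis by (simp only: mult.assoc)
  qed
  have Kpos: "K > 0"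
  proof -
    have "0 < exp (Re (cinner b 0) / 2) * c0 * exp ((norm (adjm A *v 0))\<^sup>2 / 4)" using c0 by simp
    also have "\<dots> \<le> K * (c0 * exp ((norm (0::complex^'n))\<^sup>2 / 4))" by (rule ineq)
    finally show ?thesis using c0 by (simp add: zero_less_mult_iff)
  qed
  define M where "M = 4 * ln K"
  have H: "2 * Re (cinner b w) + ((norm (adjm A *v w))\<^sup>2 - (norm w)\<^sup>2) \<le> M" for w
  proof -
    have "exp (Re (cinner b w) / 2 + (norm (adjm A *v w))\<^sup>2 / 4) \<le> exp (ln K + (norm w)\<^sup>2 / 4)"
      using ineq[of w] c0 Kpos by (simp add: exp_add mult_ac)
    hence "Re (cinner b w) / 2 + (norm (adjm A *v w))\<^sup>2 / 4 \<le> ln K + (norm w)\<^sup>2 / 4" by simp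
    thus ?thesis by (simp add: M_def field_simps)
  qed
  have quad: "(\<lambda>d. d \<le> 0) ((norm (adjm A *v w))\<^sup>2 - (norm w)\<^sup>2) \<and>
      ((norm (adjm A *v w))\<^sup>2 - (norm w)\<^sup>2 = 0 \<longrightarrow> Re (cinner b w) = 0)" for w
  proof -
    have Ht: "t * (2 * Re (cinner b w)) + t\<^sup>2 * ((norm (adjm A *v w))\<^sup>2 - (norm w)\<^sup>2) \<le> M" for t
    proof -
      have "cinner b (complex_of_real t *s w) = complex_of_real t * cinner b w" by (simp add: cinner_scale_right)
      hence r: "Re (cinner b (complex_of_real t *s w)) = t * Re (cinner b w)" by simp
      have n1: "norm (adjm A *v (complex_of_real t *s w)) = \<bar>t\<bar> * norm (adjm A *v w)" by (simp add: mv_scale norm_smult_c)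
      have n2: "norm (complex_of_real t *s w) = \<bar>t\<bar> * norm w" by (simp add: norm_smult_c)
      show ?thesis using H[of "complex_of_real t *s w"] unfolding r n1 n2
        by (simp add: power_mult_distrib algebra_simps)
    qed
    show ?thesis using quad_bound[OF Ht] by simp
  qed
  show "\<forall>w. norm (adjm A *v w) \<le> norm w"
  proof
    fix w
    have "(norm (adjm A *v w))\<^sup>2 \<le> (norm w)\<^sup>2" using quad[of w] by simp
    thus "norm (adjm A *v w) \<le> norm w" by (rule power2_le_imp_le) simp
  qed
  show "\<forall>w. norm (adjm A *v w) = norm w \<longrightarrow> cinner b w = 0"
  proof (intro allI impI)
    fix w assume e: "norm (adjm A *v w) = norm w"
    have re: "Re (cinner b w) = 0" using quad[of w] e by simp
    have "norm (adjm A *v (\<i> *s w)) = norm (\<i> *s w)" by (simp add: mv_scale norm_smult_c e)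
    hence "Re (cinner b (\<i> *s w)) = 0" using quad[of "\<i> *s w"] by simp
    hence im: "Im (cinner b w) = 0" by (simp add: cinner_scale_right)
    show "cinner b w = 0" using re im by (simp add: complex_eq_iff)
  qed
qed


theorem mainTheorem2:
  fixes A :: "((complex, 'n::{finite,linorder}) vec, 'n) vec" and b :: "(complex, 'n) vec"
  assumes "bounded_fock_op (comp_op (\<lambda>z. A *v z + b))"
  shows "\<exists>(S :: ((complex, 'n) vec, 'n) vec) (v :: (complex, 'n) vec) (P :: 'n set) X Y.
     (\<forall>i\<in>P. \<forall>j. j \<notin> P \<longrightarrow> i < j) \<and>
     (\<forall>i j. (i \<in> P \<and> j \<notin> P) \<or> (i \<notin> P \<and> j \<in> P) \<longrightarrow> S$i$j = 0) \<and>
     (\<forall>i\<in>P. \<forall>j\<in>P. j < i \<longrightarrow> S$i$j = 0) \<and>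
     (\<forall>i\<in>P. cmod (S$i$i) < 1) \<and>
     (\<forall>c. cmod c < 1 \<longrightarrow> card {i\<in>P. S$i$i = c} = alg_mult A c) \<and>
     (\<forall>i j. i \<notin> P \<and> j \<notin> P \<and> i \<noteq> j \<longrightarrow> S$i$j = 0) \<and>
     (\<forall>i. i \<notin> P \<longrightarrow> cmod (S$i$i) = 1) \<and>
     (\<forall>c. cmod c = 1 \<longrightarrow> card {i. i \<notin> P \<and> S$i$i = c} = alg_mult A c) \<and>
     (\<forall>i. i \<notin> P \<longrightarrow> v$i = 0) \<and>
     bounded_fock_op X \<and> bounded_fock_op Y \<and>
     (\<forall>f\<in>fock. Y (X f) = f \<and> X (Y f) = f) \<and>
     (\<forall>f\<in>fock. X (comp_op (\<lambda>z. A *v z + b) f) = comp_op (\<lambda>z. S *v z + v) (X f))"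
proof -
  note bc = bounded_imp_contr[OF assms]
  obtain Q :: "((complex, 'n) vec, 'n) vec" and P :: "'n set" where U1: "adjm Q ** Q = mat 1" and U2: "Q ** adjm Q = mat 1"
    and C1: "\<forall>i\<in>P. \<forall>j. j \<notin> P \<longrightarrow> i < j"
    and UT: "\<forall>i j. j < i \<longrightarrow> (adjm Q ** A ** Q)$i$j = 0"
    and C2: "\<forall>i j. (i \<in> P \<and> j \<notin> P) \<or> (i \<notin> P \<and> j \<in> P) \<longrightarrow> (adjm Q ** A ** Q)$i$j = 0"
    and C6: "\<forall>i j. i \<notin> P \<and> j \<notin> P \<and> i \<noteq> j \<longrightarrow> (adjm Q ** A ** Q)$i$j = 0"
    and D1: "\<forall>i. i \<notin> P \<longleftrightarrow> cmod ((adjm Q ** A ** Q)$i$i) = 1"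
    and D2: "\<forall>i. cmod ((adjm Q ** A ** Q)$i$i) \<le> 1"
    and C9: "\<forall>i. i \<notin> P \<longrightarrow> (adjm Q *v b)$i = 0"
  proof -
    have c1: "\<And>w. norm (adjm A *v w) \<le> norm w" using bc(1) by blast
    have c2: "\<And>w. norm (adjm A *v w) = norm w \<Longrightarrow> cinner b w = 0" using bc(2) by blast
    have ex: "\<exists>(Q::((complex, 'n) vec, 'n) vec) P. adjm Q ** Q = mat 1 \<and> Q ** adjm Q = mat 1 \<and>
    (\<forall>i\<in>P. \<forall>j. j \<notin> P \<longrightarrow> i < j) \<and>
    (\<forall>i j. j < i \<longrightarrow> (adjm Q ** A ** Q)$i$j = 0) \<and>
    (\<forall>i j. (i \<in> P \<and> j \<notin> P) \<or> (i \<notin> P \<and> j \<in> P) \<longrightarrow> (adjm Q ** A ** Q)$i$j = 0) \<and>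
    (\<forall>i j. i \<notin> P \<and> j \<notin> P \<and> i \<noteq> j \<longrightarrow> (adjm Q ** A ** Q)$i$j = 0) \<and>
    (\<forall>i. i \<notin> P \<longleftrightarrow> cmod ((adjm Q ** A ** Q)$i$i) = 1) \<and>
    (\<forall>i. cmod ((adjm Q ** A ** Q)$i$i) \<le> 1) \<and>
    (\<forall>i. i \<notin> P \<longrightarrow> (adjm Q *v b)$i = 0)" by (rule lin_struct[OF c1 c2])
    show ?thesis by (insert ex, elim exE conjE, rule that)
  qed
  define S where "S = adjm Q ** A ** Q"
  define v where "v = adjm Q *v b"
  define X where "X = comp_op (\<lambda>z. Q *v z)"
  define Y where "Y = comp_op (\<lambda>z. adjm Q *v z)"
  have am: "alg_mult A c = card {i. S$i$i = c}" for c
  proof (rule alg_mult_upper)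
    show "\<And>i j. j < i \<Longrightarrow> S$i$j = 0" using UT by (simp add: S_def)
    show "charpoly A = charpoly S" unfolding S_def by (rule charpoly_similar[OF U1, symmetric])
  qed
  have C5: "\<forall>c. cmod c < 1 \<longrightarrow> card {i\<in>P. S$i$i = c} = alg_mult A c"
  proof (intro allI impI)
    fix c :: complex assume c: "cmod c < 1"
    have "i \<in> P" if "S$i$i = c" for i using D1 c that unfolding S_def by (metis less_irrefl)
    hence "{i\<in>P. S$i$i = c} = {i. S$i$i = c}" by auto
    thus "card {i\<in>P. S$i$i = c} = alg_mult A c" by (simp add: am)
  qed
  have C8: "\<forall>c. cmod c = 1 \<longrightarrow> card {i. i \<notin> P \<and> S$i$i = c} = alg_mult A c"
  proof (intro allI impI)
    fix c :: complex assume c: "cmod c = 1"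
    have "i \<notin> P" if "S$i$i = c" for i using D1 c that unfolding S_def by metis
    hence "{i. i \<notin> P \<and> S$i$i = c} = {i. S$i$i = c}" by auto
    thus "card {i. i \<notin> P \<and> S$i$i = c} = alg_mult A c" by (simp add: am)
  qed
  have C4: "\<forall>i\<in>P. cmod (S$i$i) < 1"
  proof
    fix i assume "i \<in> P"
    hence "cmod (S$i$i) \<noteq> 1" using D1 unfolding S_def by blast
    moreover have "cmod (S$i$i) \<le> 1" using D2 unfolding S_def by blast
    ultimately show "cmod (S$i$i) < 1" by simp
  qed
  have C3: "\<forall>i\<in>P. \<forall>j\<in>P. j < i \<longrightarrow> S$i$j = 0" using UT by (simp add: S_def)
  have C7: "\<forall>i. i \<notin> P \<longrightarrow> cmod (S$i$i) = 1" using D1 by (simp add: S_def)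
  have U1': "adjm (adjm Q) ** adjm Q = mat 1" using U2 by simp
  have U2': "adjm Q ** adjm (adjm Q) = mat 1" using U1 by simp
  have BX: "bounded_fock_op X" unfolding X_def by (rule unitary_comp_bounded[OF U1 U2])
  have BY: "bounded_fock_op Y" unfolding Y_def by (rule unitary_comp_bounded[OF U1' U2'])
  have inv: "\<forall>f\<in>fock. Y (X f) = f \<and> X (Y f) = f"
    by (simp add: X_def Y_def comp_op_def o_def matrix_vector_mul_assoc U1 U2)
  have QS: "Q ** S = A ** Q"
  proof -
    have "Q ** S = (Q ** adjm Q) ** (A ** Q)" by (simp add: S_def matrix_mul_assoc)
    thus ?thesis by (simp add: U2)
  qed
  have Qv: "Q *v v = b" by (simp add: v_def matrix_vector_mul_assoc U2)
  have tw: "\<forall>f\<in>fock. X (comp_op (\<lambda>z. A *v z + b) f) = comp_op (\<lambda>z. S *v z + v) (X f)"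
    by (simp add: X_def comp_op_def o_def mv_add matrix_vector_mul_assoc QS Qv)
  have C9': "\<forall>i. i \<notin> P \<longrightarrow> v$i = 0" using C9 by (simp add: v_def)
  have C2': "\<forall>i j. (i \<in> P \<and> j \<notin> P) \<or> (i \<notin> P \<and> j \<in> P) \<longrightarrow> S$i$j = 0" using C2 by (simp add: S_def)
  have C6': "\<forall>i j. i \<notin> P \<and> j \<notin> P \<and> i \<noteq> j \<longrightarrow> S$i$j = 0" using C6 by (simp add: S_def)
  show ?thesis
    by (rule exI[where x=S], rule exI[where x=v], rule exI[where x=P], rule exI[where x=X], rule exI[where x=Y])
       (intro conjI C1 C2' C3 C4 C5 C6' C7 C8 C9' BX BY inv tw)
qed

end
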